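(* Let $(\Lambda,d)$ be a finitely aligned $k$-graph with groupoid of germs ${\mathcal G}_\Lambda$. The family $\{\Psi(F),\ {\mathcal G}_\Lambda\setminus\Psi(F): F\in S_\Lambda\}$ is a subbasis for a locally compact Hausdorff topology on ${\mathcal G}_\Lambda$ in which each $\Psi(F)$ is compact.
   Context: A $k$-graph $(\Lambda,d)$ is a countable small category $\Lambda$ (objects identified with identity morphisms) with a functor $d:\Lambda\to\mathbb N^k$ satisfying unique factorization: whenever $d(\lambda)=m+n$ there are unique $\mu,\nu$ with $d(\mu)=m$, $d(\nu)=n$, $\lambda=\mu\nu$. $r,s$ range/source. $\Lambda^{\min}(\lambda,\mu)=\{(\alpha,\beta):\lambda\alpha=\mu\beta,\ d(\lambda\alpha)=d(\lambda)\vee d(\mu)\}$; finitely aligned means all are finite. $S_\Lambda$: finite $F\subseteq\{(\lambda,\mu):s(\lambda)=s(\mu)\}$ with distinct $(\lambda,\mu),(\nu,\omega)\in F$ satisfying $\Lambda^{\min}(\lambda,\nu)=\Lambda^{\min}(\mu,\omega)=\emptyset$; inverse semigroup with $FG=\bigcup_{(\lambda,\mu)\in F,(\xi,\eta)\in G}\{(\lambda\alpha,\eta\beta):(\alpha,\beta)\in\Lambda^{\min}(\mu,\xi)\}$, $F^*=\{(\mu,\lambda):(\lambda,\mu)\in F\}$, idempotents $E(S_\Lambda)$. $\Omega_{k,m}$ ($m\in(\mathbb N\cup\{\infty\})^k$): objects $\{p\in\mathbb N^k:p\le m\}$, morphisms $(p,q)$, $p\le q\le m$, $r(p,q)=p$,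 $s(p,q)=q$, $d(p,q)=q-p$. $X_\Lambda$ = degree-preserving functors $x:\Omega_{k,m}\to\Lambda$, $d(x)=m$, $r(x)=x(0,0)$; $\sigma^m x(p,q)=x(p+m,q+m)$; $\lambda x$ ($s(\lambda)=x(0,0)$) has $(\lambda x)(0,n)=\lambda x(0,n-d(\lambda))$. $D_F=\{x:\exists(\lambda,\mu)\in F,\ x(0,d(\mu))=\mu\}$; $\theta_F(x)=\lambda\sigma^{d(\mu)}x$. $X_\Lambda$ is topologized by the subbasis $\{D_F,X_\Lambda\setminus D_F\}$ (locally compact Hausdorff). ${\mathcal G}_\Lambda$: germs $[F,x]$ of pairs $(F,x)$, $x\in D_F$, under $(F,x)\sim(G,y)$ iff $x=y$ and some $P\in E(S_\Lambda)$ has $x\in D_P$, $FP=GP$; product $[F,\theta_G(x)][G,x]=[FG,x]$, inverse $[F^*,\theta_F(x)]$, $r([F,x])=\theta_F(x)$, $s([F,x])=x$. $\Psi(F)=\{[F,x]:x\in D_F\}$. *)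

theory Defs
  imports "HOL-Analysis.Analysis" "HOL-Library.Extended_Nat" "HOL-Library.Function_Algebras"
begin

text \<open>A k-graph: a countable small category whose objects are identified with
 the identity morphisms (elements v of Mor with rng v = v), with composition
 cmp, range rng, source src, and degree functor deg into N^k, where N^k is
 modelled as functions nat to nat vanishing at every coordinate i >= k.\<close>

record 'a kgraph =
  Mor :: "'a set"
  rng :: "'a \<Rightarrow> 'a"
  src :: "'a \<Rightarrow> 'a"
  cmp :: "'a \<Rightarrow> 'a \<Rightarrow> 'a"
  deg :: "'a \<Rightarrow> nat \<Rightarrow> nat"

definition is_kgraph :: "nat \<Rightarrow> 'a kgraph \<Rightarrow> bool" where
  "is_kgraph k L \<longleftrightarrow>
     countable (Mor L) \<and>
     (\<forall>l\<in>Mor L. rng L l \<in> Mor L \<and> src L l \<in> Mor L \<and>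
        rng L (rng L l) = rng L l \<and> src L (rng L l) = rng L l \<and>
        rng L (src L l) = src L l \<and> src L (src L l) = src L l) \<and>
     (\<forall>l\<in>Mor L. \<forall>m\<in>Mor L. src L l = rng L m \<longrightarrow>
        cmp L l m \<in> Mor L \<and> rng L (cmp L l m) = rng L l \<and> src L (cmp L l m) = src L m) \<and>
     (\<forall>l\<in>Mor L. \<forall>m\<in>Mor L. \<forall>n\<in>Mor L. src L l = rng L m \<longrightarrow> src L m = rng L n \<longrightarrow>
        cmp L (cmp L l m) n = cmp L l (cmp L m n)) \<and>
     (\<forall>l\<in>Mor L. cmp L (rng L l) l = l \<and> cmp L l (src L l) = l) \<and>
     (\<forall>l\<in>Mor L. \<forall>i\<ge>k. deg L l i = 0) \<and>
     (\<forall>l\<in>Mor L. \<forall>m\<in>Mor L. src L l = rng L m \<longrightarrow> deg L (cmp L l m) = deg L l + deg L m) \<and>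
     (\<forall>l\<in>Mor L. \<forall>p q. deg L l = p + q \<longrightarrow>
        (\<exists>!(m, n). m \<in> Mor L \<and> n \<in> Mor L \<and> src L m = rng L n \<and>
                   deg L m = p \<and> deg L n = q \<and> l = cmp L m n))"

definition Lmin :: "'a kgraph \<Rightarrow> 'a \<Rightarrow> 'a \<Rightarrow> ('a \<times> 'a) set" where
  "Lmin L l m = {(a, b). a \<in> Mor L \<and> b \<in> Mor L \<and> src L l = rng L a \<and> src L m = rng L b \<and>
      cmp L l a = cmp L m b \<and> deg L (cmp L l a) = sup (deg L l) (deg L m)}"

definition finitely_aligned :: "'a kgraph \<Rightarrow> bool" where
  "finitely_aligned L \<longleftrightarrow> (\<forall>l\<in>Mor L. \<forall>m\<in>Mor L. finite (Lmin L l m))"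

definition SL :: "'a kgraph \<Rightarrow> ('a \<times> 'a) set set" where
  "SL L = {F. finite F \<and> F \<subseteq> {(l, m). l \<in> Mor L \<and> m \<in> Mor L \<and> src L l = src L m} \<and>
      (\<forall>(l, m)\<in>F. \<forall>(n, w)\<in>F. (l, m) \<noteq> (n, w) \<longrightarrow> Lmin L l n = {} \<and> Lmin L m w = {})}"

definition smult :: "'a kgraph \<Rightarrow> ('a \<times> 'a) set \<Rightarrow> ('a \<times> 'a) set \<Rightarrow> ('a \<times> 'a) set" where
  "smult L F G = (\<Union>(l, m)\<in>F. \<Union>(xi, eta)\<in>G.
      {(cmp L l a, cmp L eta b) | a b. (a, b) \<in> Lmin L m xi})"

definition sinv :: "('a \<times> 'a) set \<Rightarrow> ('a \<times> 'a) set" where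
  "sinv F = (\<lambda>(l, m). (m, l)) ` F"

definition ESL :: "'a kgraph \<Rightarrow> ('a \<times> 'a) set set" where
  "ESL L = {P \<in> SL L. smult L P P = P}"

text \<open>Paths: a path x of degree m is represented by the pair (m, f) with
 f(p,q) = x(p,q) for morphisms (p,q) of Omega_{k,m}, and f = undefined elsewhere.\<close>

type_synonym 'a path = "(nat \<Rightarrow> enat) \<times> ((nat \<Rightarrow> nat) \<times> (nat \<Rightarrow> nat) \<Rightarrow> 'a)"

definition omega_obj :: "nat \<Rightarrow> (nat \<Rightarrow> enat) \<Rightarrow> (nat \<Rightarrow> nat) set" where
  "omega_obj k m = {p. (\<forall>i\<ge>k. p i = 0) \<and> (\<forall>i. enat (p i) \<le> m i)}"

definition omega_mor :: "nat \<Rightarrow> (nat \<Rightarrow> enat) \<Rightarrow> (nat \<Rightarrow> nat) \<Rightarrow> (nat \<Rightarrow> nat) \<Rightarrow> bool" where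
  "omega_mor k m p q \<longleftrightarrow> p \<in> omega_obj k m \<and> q \<in> omega_obj k m \<and> p \<le> q"

definition is_path :: "nat \<Rightarrow> 'a kgraph \<Rightarrow> 'a path \<Rightarrow> bool" where
  "is_path k L x \<longleftrightarrow>
     (\<forall>i\<ge>k. fst x i = 0) \<and>
     (\<forall>p q. omega_mor k (fst x) p q \<longrightarrow>
        snd x (p, q) \<in> Mor L \<and> deg L (snd x (p, q)) = q - p \<and>
        rng L (snd x (p, q)) = snd x (p, p) \<and> src L (snd x (p, q)) = snd x (q, q)) \<and>
     (\<forall>p q t. omega_mor k (fst x) p q \<longrightarrow> omega_mor k (fst x) q t \<longrightarrow>
        cmp L (snd x (p, q)) (snd x (q, t)) = snd x (p, t)) \<and>
     (\<forall>p q. \<not> omega_mor k (fst x) p q \<longrightarrow> snd x (p, q) = undefined)"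

definition XL :: "nat \<Rightarrow> 'a kgraph \<Rightarrow> 'a path set" where
  "XL k L = {x. is_path k L x}"

definition DF :: "nat \<Rightarrow> 'a kgraph \<Rightarrow> ('a \<times> 'a) set \<Rightarrow> 'a path set" where
  "DF k L F = {x \<in> XL k L. \<exists>(l, m)\<in>F.
      (\<lambda>i. enat (deg L m i)) \<le> fst x \<and> snd x (0, deg L m) = m}"

definition germ_rel :: "nat \<Rightarrow> 'a kgraph \<Rightarrow> (('a \<times> 'a) set \<times> 'a path) \<Rightarrow> (('a \<times> 'a) set \<times> 'a path) \<Rightarrow> bool" where
  "germ_rel k L Fx Gy \<longleftrightarrow>
     (case Fx of (F, x) \<Rightarrow> case Gy of (G, y) \<Rightarrow>
        F \<in> SL L \<and> G \<in> SL L \<and> x \<in> DF k L F \<and> y \<in> DF k L G \<and> x = y \<and>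
        (\<exists>P\<in>ESL L. x \<in> DF k L P \<and> smult L F P = smult L G P))"

definition germ :: "nat \<Rightarrow> 'a kgraph \<Rightarrow> ('a \<times> 'a) set \<Rightarrow> 'a path \<Rightarrow> (('a \<times> 'a) set \<times> 'a path) set" where
  "germ k L F x = {Gy. germ_rel k L (F, x) Gy}"

definition GL :: "nat \<Rightarrow> 'a kgraph \<Rightarrow> (('a \<times> 'a) set \<times> 'a path) set set" where
  "GL k L = {germ k L F x | F x. F \<in> SL L \<and> x \<in> DF k L F}"

definition Psi :: "nat \<Rightarrow> 'a kgraph \<Rightarrow> ('a \<times> 'a) set \<Rightarrow> (('a \<times> 'a) set \<times> 'a path) set set" where
  "Psi k L F = {germ k L F x | x. x \<in> DF k L F}"

end

theory Submission
  imports Defs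
begin

locale kg =
  fixes k :: nat and L :: "'a kgraph"
  assumes kg: "is_kgraph k L"
begin

lemma ex1_pair_uniq: "\<exists>!(m,n). P m n \<Longrightarrow> P a b \<Longrightarrow> P a' b' \<Longrightarrow> a = a' \<and> b = b'"
  by (metis (mono_tags, lifting) case_prodI prod.inject)

definition comp :: "'a \<Rightarrow> 'a \<Rightarrow> bool" where
  "comp a b \<longleftrightarrow> a \<in> Mor L \<and> b \<in> Mor L \<and> src L a = rng L b"

lemma obj:
  assumes "l \<in> Mor L"
  shows "rng L l \<in> Mor L" "src L l \<in> Mor L" "rng L (rng L l) = rng L l" "src L (rng L l) = rng L l"
    "rng L (src L l) = src L l" "src L (src L l) = src L l"
  using kg assms unfolding is_kgraph_def by auto

lemma comp_simps:
  assumes "comp a b"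
  shows "cmp L a b \<in> Mor L" "rng L (cmp L a b) = rng L a" "src L (cmp L a b) = src L b"
    "deg L (cmp L a b) = deg L a + deg L b"
  using kg assms unfolding is_kgraph_def comp_def by auto

lemma compD: "comp a b \<Longrightarrow> a \<in> Mor L" "comp a b \<Longrightarrow> b \<in> Mor L" "comp a b \<Longrightarrow> src L a = rng L b"
  by (auto simp: comp_def)

lemma assoc:
  assumes "comp a b" "comp b e"
  shows "cmp L (cmp L a b) e = cmp L a (cmp L b e)"
  using kg assms unfolding is_kgraph_def comp_def by auto

lemma unit_l: "l \<in> Mor L \<Longrightarrow> cmp L (rng L l) l = l"
  and unit_r: "l \<in> Mor L \<Longrightarrow> cmp L l (src L l) = l"
  using kg unfolding is_kgraph_def by auto

lemma comp_rng: "l \<in> Mor L \<Longrightarrow> comp (rng L l) l" and comp_src: "l \<in> Mor L \<Longrightarrow> comp l (src L l)"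
  using obj by (auto simp: comp_def)

lemma deg_hi: "l \<in> Mor L \<Longrightarrow> i \<ge> k \<Longrightarrow> deg L l i = 0"
  using kg unfolding is_kgraph_def by auto

lemma fact_ex1:
  assumes "l \<in> Mor L" "deg L l = p + q"
  shows "\<exists>!(m, n). m \<in> Mor L \<and> n \<in> Mor L \<and> src L m = rng L n \<and>
                   deg L m = p \<and> deg L n = q \<and> l = cmp L m n"
  using kg assms unfolding is_kgraph_def by blast

lemma fact_ex:
  assumes "l \<in> Mor L" "deg L l = p + q"
  obtains u v where "comp u v" "deg L u = p" "deg L v = q" "l = cmp L u v"
  using fact_ex1[OF assms] unfolding comp_def by auto

lemma fun_add_cancel: "(a::nat\<Rightarrow>nat) + b = a + c \<Longrightarrow> b = c"
  by (auto simp: fun_eq_iff)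
lemma fun_add_cancel2: "(b::nat\<Rightarrow>nat) + a = c + a \<Longrightarrow> b = c"
  by (auto simp: fun_eq_iff)

lemma fact_uniq:
  assumes "comp u v" "comp u' v'" "cmp L u v = cmp L u' v'" "deg L u = deg L u'"
  shows "u = u' \<and> v = v'"
proof -
  let ?l = "cmp L u v"
  have l: "?l \<in> Mor L" using comp_simps(1)[OF assms(1)] by simp
  have d: "deg L ?l = deg L u + deg L v" using comp_simps(4)[OF assms(1)] by simp
  have "deg L ?l = deg L u' + deg L v'" using comp_simps(4)[OF assms(2)] assms(3) by simp
  hence dv: "deg L v = deg L v'" using d assms(4) fun_add_cancel by metis
  show ?thesis
    by (rule ex1_pair_uniq[OF fact_ex1[OF l d]]) (use assms dv in \<open>auto simp: comp_def\<close>)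
qed

lemma deg_vertex:
  assumes "l \<in> Mor L" shows "deg L (rng L l) = 0" "deg L (src L l) = 0"
proof -
  have "\<And>v. v \<in> Mor L \<Longrightarrow> rng L v = v \<Longrightarrow> deg L v = 0"
  proof -
    fix v assume v: "v \<in> Mor L" "rng L v = v"
    have "comp v v" using v obj[OF v(1)] by (auto simp: comp_def)
    hence "deg L (cmp L v v) = deg L v + deg L v" by (rule comp_simps)
    moreover have "cmp L v v = v" using unit_l[OF v(1)] v by simp
    ultimately show "deg L v = 0" by (auto simp: fun_eq_iff)
  qed
  thus "deg L (rng L l) = 0" "deg L (src L l) = 0" using obj[OF assms] by auto
qed

lemma deg0:
  assumes "l \<in> Mor L" "deg L l = 0"
  shows "rng L l = l" "src L l = l"
proof -
  have "rng L l = l \<and> l = src L l"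
    by (rule fact_uniq[OF comp_rng[OF assms(1)] comp_src[OF assms(1)]])
       (use unit_l[OF assms(1)] unit_r[OF assms(1)] deg_vertex[OF assms(1)] assms(2) in auto)
  thus "rng L l = l" "src L l = l" by auto
qed

lemma left_cancel:
  assumes "comp e a" "comp e b" "cmp L e a = cmp L e b" shows "a = b"
  using fact_uniq[OF assms(1,2,3)] by simp

lemma right_cancel:
  assumes "comp a e" "comp b e" "cmp L a e = cmp L b e" shows "a = b"
proof -
  have "deg L a + deg L e = deg L b + deg L e" using comp_simps(4)[OF assms(1)] comp_simps(4)[OF assms(2)] assms(3) by metis
  hence "deg L a = deg L b" by (rule fun_add_cancel2)
  thus ?thesis using fact_uniq[OF assms(1,2,3)] by simp
qed

lemma prefix:
  assumes "comp u v" "comp u' v'" "cmp L u v = cmp L u' v'" "deg L u \<le> deg L u'"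
  obtains w where "comp u w" "comp w v'" "u' = cmp L u w" "v = cmp L w v'"
proof -
  have u': "u' \<in> Mor L" using assms(2) by (simp add: comp_def)
  have "deg L u' = deg L u + (deg L u' - deg L u)" using assms(4) by (auto simp: fun_eq_iff le_fun_def)
  then obtain u1 w where uw: "comp u1 w" "deg L u1 = deg L u" "deg L w = deg L u' - deg L u" "u' = cmp L u1 w"
    using fact_ex[OF u'] by metis
  have wv: "comp w v'" using uw assms(2) comp_simps[OF uw(1)] by (auto simp: comp_def)
  have c1: "comp u1 (cmp L w v')" using uw wv comp_simps[OF wv] by (auto simp: comp_def)
  have "cmp L u v = cmp L u1 (cmp L w v')" using assms(3) uw assoc[OF uw(1) wv] by simp
  hence "u = u1 \<and> v = cmp L w v'" using fact_uniq[OF assms(1) c1] uw(2) by simp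
  thus ?thesis using that uw wv by auto
qed

lemma CE:
  assumes "comp u a" "comp v b" "cmp L u a = cmp L v b"
  shows "Lmin L u v \<noteq> {}"
proof -
  let ?e = "cmp L u a"
  have e: "?e \<in> Mor L" by (rule comp_simps(1)[OF assms(1)])
  have de1: "deg L ?e = deg L u + deg L a" by (rule comp_simps(4)[OF assms(1)])
  have de2: "deg L ?e = deg L v + deg L b" using comp_simps(4)[OF assms(2)] assms(3) by simp
  let ?p = "sup (deg L u) (deg L v)"
  have "deg L ?e = ?p + (deg L ?e - ?p)"
  proof (rule ext)
    fix x
    have "deg L ?e x = deg L u x + deg L a x" "deg L ?e x = deg L v x + deg L b x"
      using de1 de2 by (auto simp: fun_eq_iff)
    thus "deg L ?e x = (?p + (deg L ?e - ?p)) x" by (simp add: sup_fun_def sup_nat_def)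
  qed
  then obtain e1 e2 where f: "comp e1 e2" "deg L e1 = ?p" "?e = cmp L e1 e2"
    using fact_ex[OF e] by metis
  obtain w where w: "comp u w" "e1 = cmp L u w" using prefix[OF assms(1) f(1)] f by (metis sup_ge1)
  obtain w' where w': "comp v w'" "e1 = cmp L v w'" using prefix[OF assms(2) f(1)] f assms(3) by (metis sup_ge2)
  have "(w, w') \<in> Lmin L u v" using w w' f unfolding Lmin_def comp_def by auto
  thus ?thesis by auto
qed


definition inZ :: "'a path \<Rightarrow> 'a \<Rightarrow> bool" where
  "inZ x \<mu> \<longleftrightarrow> (\<lambda>i. enat (deg L \<mu> i)) \<le> fst x \<and> snd x (0, deg L \<mu>) = \<mu>"

lemma Om_le: "q \<in> omega_obj k m \<Longrightarrow> p \<le> q \<Longrightarrow> p \<in> omega_obj k m"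
  unfolding omega_obj_def le_fun_def
proof (intro CollectI conjI allI impI)
  fix i assume "q \<in> {p. (\<forall>i\<ge>k. p i = 0) \<and> (\<forall>i. enat (p i) \<le> m i)}" "\<forall>x. p x \<le> q x"
  thus "i \<ge> k \<Longrightarrow> p i = 0" by (metis (mono_tags) le_zero_eq mem_Collect_eq)
  show "enat (p i) \<le> m i" using \<open>q \<in> _\<close> \<open>\<forall>x. p x \<le> q x\<close> by (auto intro: order_trans[of "enat (p i)" "enat (q i)"])
qed
lemma Om_sup: "p \<in> omega_obj k m \<Longrightarrow> q \<in> omega_obj k m \<Longrightarrow> sup p q \<in> omega_obj k m"
  unfolding omega_obj_def by (simp add: sup_fun_def sup_nat_def max_def)
lemma Om_0: "0 \<in> omega_obj k m"
  unfolding omega_obj_def by (simp add: zero_enat_def[symmetric])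
lemma XL_D:
  assumes "x \<in> XL k L"
  shows "\<forall>i\<ge>k. fst x i = 0"
    "\<And>p q. omega_mor k (fst x) p q \<Longrightarrow>
        snd x (p, q) \<in> Mor L \<and> deg L (snd x (p, q)) = q - p \<and>
        rng L (snd x (p, q)) = snd x (p, p) \<and> src L (snd x (p, q)) = snd x (q, q)"
    "\<And>p q t. omega_mor k (fst x) p q \<Longrightarrow> omega_mor k (fst x) q t \<Longrightarrow>
        cmp L (snd x (p, q)) (snd x (q, t)) = snd x (p, t)"
    "\<And>p q. \<not> omega_mor k (fst x) p q \<Longrightarrow> snd x (p, q) = undefined"
  using assms unfolding XL_def is_path_def by simp_all

lemma path_props:
  assumes "x \<in> XL k L" "p \<in> omega_obj k (fst x)" "q \<in> omega_obj k (fst x)" "p \<le> q"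
  shows "snd x (p, q) \<in> Mor L" "deg L (snd x (p, q)) = q - p"
    "rng L (snd x (p, q)) = snd x (p, p)" "src L (snd x (p, q)) = snd x (q, q)"
proof -
  have "omega_mor k (fst x) p q" using assms(2,3,4) unfolding omega_mor_def by simp
  note XL_D(2)[OF assms(1) this]
  thus "snd x (p, q) \<in> Mor L" "deg L (snd x (p, q)) = q - p"
    "rng L (snd x (p, q)) = snd x (p, p)" "src L (snd x (p, q)) = snd x (q, q)" by simp_all
qed

lemma path_cmp:
  assumes "x \<in> XL k L" "p \<in> omega_obj k (fst x)" "q \<in> omega_obj k (fst x)" "t \<in> omega_obj k (fst x)"
    "p \<le> q" "q \<le> t"
  shows "comp (snd x (p, q)) (snd x (q, t))" "cmp L (snd x (p, q)) (snd x (q, t)) = snd x (p, t)"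
proof -
  have a: "snd x (p, q) \<in> Mor L" "src L (snd x (p, q)) = snd x (q, q)"
    using path_props[OF assms(1,2,3,5)] by simp_all
  have b: "snd x (q, t) \<in> Mor L" "rng L (snd x (q, t)) = snd x (q, q)"
    using path_props[OF assms(1,3,4,6)] by simp_all
  show "comp (snd x (p, q)) (snd x (q, t))" using a b unfolding comp_def by simp
  have "omega_mor k (fst x) p q" "omega_mor k (fst x) q t" using assms(2-6) unfolding omega_mor_def by simp_all
  thus "cmp L (snd x (p, q)) (snd x (q, t)) = snd x (p, t)" using XL_D(3)[OF assms(1)] by blast
qed

lemma path_undef:
  assumes "x \<in> XL k L" "\<not> omega_mor k (fst x) p q" shows "snd x (p, q) = undefined"
  using XL_D(4)[OF assms] .

lemma path_hi: "x \<in> XL k L \<Longrightarrow> i \<ge> k \<Longrightarrow> fst x i = 0"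
  using XL_D(1) by blast

lemma deg_Om: "\<mu> \<in> Mor L \<Longrightarrow> inZ x \<mu> \<Longrightarrow> deg L \<mu> \<in> omega_obj k (fst x)"
  unfolding inZ_def omega_obj_def le_fun_def using deg_hi by auto

lemma Z_ext:
  assumes "x \<in> XL k L" "\<mu> \<in> Mor L" "inZ x \<mu>" "n \<in> omega_obj k (fst x)" "deg L \<mu> \<le> n"
  shows "comp \<mu> (snd x (deg L \<mu>, n))" "cmp L \<mu> (snd x (deg L \<mu>, n)) = snd x (0, n)"
  using path_cmp[OF assms(1) Om_0 deg_Om[OF assms(2,3)] assms(4) _ assms(5)] assms(3)
  unfolding inZ_def by auto

lemma Z_self:
  assumes "x \<in> XL k L" "n \<in> omega_obj k (fst x)"
  shows "inZ x (snd x (0, n))" "snd x (0, n) \<in> Mor L" "deg L (snd x (0, n)) = n"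
proof -
  have d: "deg L (snd x (0, n)) = n" using path_props(2)[OF assms(1) Om_0 assms(2)] by simp
  show "deg L (snd x (0, n)) = n" by (fact d)
  show "snd x (0, n) \<in> Mor L" using path_props(1)[OF assms(1) Om_0 assms(2)] by simp
  show "inZ x (snd x (0, n))" unfolding inZ_def d using assms(2) unfolding omega_obj_def le_fun_def by auto
qed

lemma Z_prefix:
  assumes "x \<in> XL k L" "comp a b" "inZ x (cmp L a b)"
  shows "inZ x a"
proof -
  have ab: "cmp L a b \<in> Mor L" using comp_simps[OF assms(2)] by simp
  have a: "a \<in> Mor L" using assms(2) by (simp add: comp_def)
  have dab: "deg L (cmp L a b) \<in> omega_obj k (fst x)" by (rule deg_Om[OF ab assms(3)])
  have le: "deg L a \<le> deg L (cmp L a b)" using comp_simps(4)[OF assms(2)] by (simp add: le_fun_def)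
  have da: "deg L a \<in> omega_obj k (fst x)" using Om_le[OF dab le] .
  have "cmp L (snd x (0, deg L a)) (snd x (deg L a, deg L (cmp L a b))) = cmp L a b"
    using path_cmp(2)[OF assms(1) Om_0 da dab _ le] assms(3) unfolding inZ_def by simp
  moreover have "deg L (snd x (0, deg L a)) = deg L a" using path_props(2)[OF assms(1) Om_0 da] by simp
  ultimately have "snd x (0, deg L a) = a"
    using fact_uniq[OF path_cmp(1)[OF assms(1) Om_0 da dab _ le] assms(2)] by simp
  thus ?thesis unfolding inZ_def using da unfolding omega_obj_def le_fun_def by auto
qed

lemma SL_D:
  assumes "F \<in> SL L"
  shows "finite F" "\<And>l m. (l, m) \<in> F \<Longrightarrow> l \<in> Mor L \<and> m \<in> Mor L \<and> src L l = src L m"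
proof -
  show "finite F" using assms unfolding SL_def by simp
  fix l m assume "(l, m) \<in> F"
  moreover have "F \<subseteq> {(l, m). l \<in> Mor L \<and> m \<in> Mor L \<and> src L l = src L m}" using assms unfolding SL_def by simp
  ultimately show "l \<in> Mor L \<and> m \<in> Mor L \<and> src L l = src L m" by blast
qed

lemma SL_D3:
  assumes "F \<in> SL L" "(l, m) \<in> F" "(n, w) \<in> F" "(l, m) \<noteq> (n, w)"
  shows "Lmin L l n = {} \<and> Lmin L m w = {}"
proof -
  have H: "\<forall>(l, m)\<in>F. \<forall>(n, w)\<in>F. (l, m) \<noteq> (n, w) \<longrightarrow> Lmin L l n = {} \<and> Lmin L m w = {}"
    using assms(1) unfolding SL_def by simp
  have "\<forall>(n, w)\<in>F. (l, m) \<noteq> (n, w) \<longrightarrow> Lmin L l n = {} \<and> Lmin L m w = {}"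
    using bspec[OF H assms(2)] by simp
  from bspec[OF this assms(3)] show ?thesis using assms(4) by simp
qed
lemma DF_iff: "x \<in> DF k L F \<longleftrightarrow> x \<in> XL k L \<and> (\<exists>(l, m)\<in>F. inZ x m)"
  unfolding DF_def inZ_def by simp

lemma Lmin_X:
  assumes "x \<in> XL k L" "m \<in> Mor L" "m' \<in> Mor L" "inZ x m" "inZ x m'"
  shows "(snd x (deg L m, sup (deg L m) (deg L m')), snd x (deg L m', sup (deg L m) (deg L m'))) \<in> Lmin L m m'"
    "cmp L m (snd x (deg L m, sup (deg L m) (deg L m'))) = snd x (0, sup (deg L m) (deg L m'))"
    "cmp L m' (snd x (deg L m', sup (deg L m) (deg L m'))) = snd x (0, sup (deg L m) (deg L m'))"
    "comp m (snd x (deg L m, sup (deg L m) (deg L m')))"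
    "comp m' (snd x (deg L m', sup (deg L m) (deg L m')))"
proof -
  let ?n = "sup (deg L m) (deg L m')"
  have n: "?n \<in> omega_obj k (fst x)" using Om_sup deg_Om assms by blast
  note e1 = Z_ext[OF assms(1,2,4) n sup_ge1] and e2 = Z_ext[OF assms(1,3,5) n sup_ge2]
  show "cmp L m (snd x (deg L m, ?n)) = snd x (0, ?n)" "cmp L m' (snd x (deg L m', ?n)) = snd x (0, ?n)"
    "comp m (snd x (deg L m, ?n))" "comp m' (snd x (deg L m', ?n))" using e1 e2 by auto
  show "(snd x (deg L m, ?n), snd x (deg L m', ?n)) \<in> Lmin L m m'"
    unfolding Lmin_def using e1 e2 Z_self(3)[OF assms(1) n] comp_simps(1)[OF e1(1)] unfolding comp_def by simp
qed

lemma pair_uniq: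
  assumes "F \<in> SL L" "(l, m) \<in> F" "(l2, m2) \<in> F" "x \<in> XL k L" "inZ x m" "inZ x m2"
  shows "l = l2 \<and> m = m2"
proof (rule ccontr)
  assume "\<not> (l = l2 \<and> m = m2)"
  hence "Lmin L m m2 = {}" using SL_D3[OF assms(1,2,3)] by auto
  moreover have "m \<in> Mor L" "m2 \<in> Mor L" using SL_D(2)[OF assms(1)] assms(2,3) by auto
  ultimately show False using Lmin_X(1)[OF assms(4) _ _ assms(5,6)] by auto
qed

end

context kg
begin

lemma smult_iff:
  "z \<in> smult L F G \<longleftrightarrow> (\<exists>l m xi eta a b. (l, m) \<in> F \<and> (xi, eta) \<in> G \<and> (a, b) \<in> Lmin L m xi \<and>
      z = (cmp L l a, cmp L eta b))"
  unfolding smult_def by blast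

lemma Lmin_D:
  assumes "(a, b) \<in> Lmin L m xi"
  shows "a \<in> Mor L" "b \<in> Mor L" "src L m = rng L a" "src L xi = rng L b" "cmp L m a = cmp L xi b"
    "deg L (cmp L m a) = sup (deg L m) (deg L xi)"
  using assms unfolding Lmin_def mem_Collect_eq prod.case by blast+

lemma idem_diag:
  assumes "P \<in> ESL L" "(p, q) \<in> P"
  shows "p = q"
proof -
  have P: "P \<in> SL L" and PP: "smult L P P = P" using assms(1) unfolding ESL_def by simp_all
  have "(p, q) \<in> smult L P P" using PP assms(2) by simp
  then obtain p1 q1 p2 q2 a b where w: "(p1, q1) \<in> P" "(p2, q2) \<in> P" "(a, b) \<in> Lmin L q1 p2"
    "(p, q) = (cmp L p1 a, cmp L q2 b)" unfolding smult_iff by blast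
  note ab = Lmin_D[OF w(3)]
  have s1: "p1 \<in> Mor L" "src L p1 = src L q1" using SL_D(2)[OF P w(1)] by simp_all
  have s2: "q2 \<in> Mor L" "src L p2 = src L q2" using SL_D(2)[OF P w(2)] by simp_all
  have pq: "p \<in> Mor L" "q \<in> Mor L" "src L p = src L q" using SL_D(2)[OF P assms(2)] by simp_all
  have c1: "comp p1 a" using s1 ab unfolding comp_def by simp
  have c2: "comp q2 b" using s2 ab unfolding comp_def by simp
  have pe: "p = cmp L p1 a" and qe: "q = cmp L q2 b" using w(4) by simp_all
  have "cmp L p1 a = cmp L p (src L p)" using pe unit_r[OF pq(1)] by metis
  hence "Lmin L p1 p \<noteq> {}" by (rule CE[OF c1 comp_src[OF pq(1)]])
  hence e1: "(p1, q1) = (p, q)" using SL_D3[OF P w(1) assms(2)] by blast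
  have "cmp L q2 b = cmp L q (src L q)" using qe unit_r[OF pq(2)] by metis
  hence "Lmin L q2 q \<noteq> {}" by (rule CE[OF c2 comp_src[OF pq(2)]])
  hence e2: "(p2, q2) = (p, q)" using SL_D3[OF P w(2) assms(2)] by blast
  have "deg L p = deg L p + deg L a" using comp_simps(4)[OF c1] pe e1 by (metis prod.inject)
  hence "deg L a = 0" by (auto simp: fun_eq_iff)
  hence a: "a = src L p" using deg0[OF ab(1)] ab(3) e1 pq(3) by simp
  have "deg L q = deg L q + deg L b" using comp_simps(4)[OF c2] qe e2 by (metis prod.inject)
  hence "deg L b = 0" by (auto simp: fun_eq_iff)
  hence b: "b = src L q" using deg0[OF ab(2)] ab(4) e2 pq(3) by simp
  have "cmp L q a = cmp L p b" using ab(5) e1 e2 by simp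
  hence "cmp L q (src L q) = cmp L p (src L p)" using a b pq(3) by simp
  thus "p = q" using unit_r[OF pq(1)] unit_r[OF pq(2)] by simp
qed

lemma single_SL: "\<mu> \<in> Mor L \<Longrightarrow> {(\<mu>, \<mu>)} \<in> SL L"
  unfolding SL_def by simp

lemma smult_single:
  assumes F: "F \<in> SL L" and lm: "(l, m) \<in> F" and x: "x \<in> XL k L" and Z: "inZ x m"
    and n: "n \<in> omega_obj k (fst x)" and le: "deg L m \<le> n"
  shows "smult L F {(snd x (0, n), snd x (0, n))} = {(cmp L l (snd x (deg L m, n)), snd x (0, n))}"
proof -
  let ?\<mu> = "snd x (0, n)" and ?e = "snd x (deg L m, n)"
  have lmM: "l \<in> Mor L" "m \<in> Mor L" "src L l = src L m" using SL_D(2)[OF F lm] by simp_all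
  note ext = Z_ext[OF x lmM(2) Z n le]
  have mu: "?\<mu> \<in> Mor L" "deg L ?\<mu> = n" using Z_self[OF x n] by simp_all
  have sub: "z \<in> {(cmp L l ?e, ?\<mu>)}" if z: "z \<in> smult L F {(?\<mu>, ?\<mu>)}" for z
  proof -
    obtain l2 m2 a b where w: "(l2, m2) \<in> F" "(a, b) \<in> Lmin L m2 ?\<mu>" "z = (cmp L l2 a, cmp L ?\<mu> b)"
      using z unfolding smult_iff by blast
    note ab = Lmin_D[OF w(2)]
    have m2: "m2 \<in> Mor L" using SL_D(2)[OF F w(1)] by simp
    have c1: "comp m2 a" using m2 ab(1,3) unfolding comp_def by simp
    have c2: "comp ?\<mu> b" using mu(1) ab(2,4) unfolding comp_def by simp
    have se: "src L ?e = src L ?\<mu>" using comp_simps(3)[OF ext(1)] ext(2) by simp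
    have ce: "comp ?e b" using c2 se ext(1) unfolding comp_def by simp
    have "cmp L m2 a = cmp L ?\<mu> b" by (rule ab(5))
    also have "\<dots> = cmp L (cmp L m ?e) b" using ext(2) by simp
    also have "\<dots> = cmp L m (cmp L ?e b)" by (rule assoc[OF ext(1) ce])
    finally have eqc: "cmp L m2 a = cmp L m (cmp L ?e b)" .
    have cm: "comp m (cmp L ?e b)" using ext(1) comp_simps(1,2)[OF ce] unfolding comp_def by simp
    have "Lmin L m2 m \<noteq> {}" by (rule CE[OF c1 cm eqc])
    hence eq: "(l2, m2) = (l, m)" using SL_D3[OF F w(1) lm] by blast
    have "deg L (cmp L ?\<mu> b) = sup (deg L m) n" using ab(5,6) eq mu(2) by simp
    hence "deg L ?\<mu> + deg L b = deg L ?\<mu>" using comp_simps(4)[OF c2] mu(2) le by (simp add: sup_absorb2)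
    hence "deg L b = 0" by (auto simp: fun_eq_iff)
    hence b: "b = src L ?\<mu>" using deg0[OF ab(2)] ab(4) by simp
    hence "cmp L ?\<mu> b = ?\<mu>" using unit_r[OF mu(1)] by simp
    hence "cmp L m a = cmp L m ?e" using ab(5) eq ext(2) by simp
    hence "a = ?e" using left_cancel[OF _ ext(1)] c1 eq by simp
    thus ?thesis using w(3) eq \<open>cmp L ?\<mu> b = ?\<mu>\<close> by simp
  qed
  have "(?e, src L ?\<mu>) \<in> Lmin L m ?\<mu>"
    unfolding Lmin_def using ext comp_simps[OF ext(1)] obj[OF mu(1)] unit_r[OF mu(1)] mu le
    unfolding comp_def by (simp add: sup_absorb2)
  hence "(cmp L l ?e, cmp L ?\<mu> (src L ?\<mu>)) \<in> smult L F {(?\<mu>, ?\<mu>)}"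
    unfolding smult_iff using lm by blast
  hence "(cmp L l ?e, ?\<mu>) \<in> smult L F {(?\<mu>, ?\<mu>)}" using unit_r[OF mu(1)] by simp
  thus ?thesis using sub by blast
qed

lemma single_ESL:
  assumes x: "x \<in> XL k L" and n: "n \<in> omega_obj k (fst x)"
  shows "{(snd x (0, n), snd x (0, n))} \<in> ESL L"
proof -
  let ?\<mu> = "snd x (0, n)"
  have mu: "?\<mu> \<in> Mor L" "deg L ?\<mu> = n" "inZ x ?\<mu>" using Z_self[OF x n] by simp_all
  have S: "{(?\<mu>, ?\<mu>)} \<in> SL L" using single_SL[OF mu(1)] .
  have "smult L {(?\<mu>, ?\<mu>)} {(?\<mu>, ?\<mu>)} = {(cmp L ?\<mu> (snd x (deg L ?\<mu>, n)), ?\<mu>)}"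
    by (rule smult_single[OF S _ x mu(3) n]) (simp_all add: mu(2))
  also have "snd x (deg L ?\<mu>, n) = src L ?\<mu>" using path_props(4)[OF x Om_0 n] mu(2) by simp
  also have "cmp L ?\<mu> (src L ?\<mu>) = ?\<mu>" using unit_r[OF mu(1)] .
  finally have "smult L {(?\<mu>, ?\<mu>)} {(?\<mu>, ?\<mu>)} = {(?\<mu>, ?\<mu>)}" .
  thus ?thesis using S unfolding ESL_def by simp
qed

end

context kg
begin

definition agree :: "('a \<times> 'a) set \<Rightarrow> ('a \<times> 'a) set \<Rightarrow> 'a path \<Rightarrow> bool" where
  "agree F G x \<longleftrightarrow> (\<exists>l m l' m' n. (l, m) \<in> F \<and> (l', m') \<in> G \<and> inZ x m \<and> inZ x m' \<and>
     n \<in> omega_obj k (fst x) \<and> deg L m \<le> n \<and> deg L m' \<le> n \<and>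
     cmp L l (snd x (deg L m, n)) = cmp L l' (snd x (deg L m', n)))"

lemma agree_mono:
  assumes F: "F \<in> SL L" and lm: "(l, m) \<in> F" and x: "x \<in> XL k L" and Z: "inZ x m"
    and n: "n \<in> omega_obj k (fst x)" and le: "deg L m \<le> n"
    and n': "n' \<in> omega_obj k (fst x)" and le': "n \<le> n'"
  shows "cmp L l (snd x (deg L m, n')) = cmp L (cmp L l (snd x (deg L m, n))) (snd x (n, n'))"
proof -
  have lmM: "l \<in> Mor L" "m \<in> Mor L" "src L l = src L m" using SL_D(2)[OF F lm] by simp_all
  have dm: "deg L m \<in> omega_obj k (fst x)" by (rule deg_Om[OF lmM(2) Z])
  note pc = path_cmp[OF x dm n n' le le']
  have "src L m = snd x (deg L m, deg L m)" using path_props(4)[OF x Om_0 dm] Z unfolding inZ_def by simp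
  also have "\<dots> = rng L (snd x (deg L m, n))" using path_props(3)[OF x dm n le] by simp
  finally have c: "comp l (snd x (deg L m, n))" using lmM path_props(1)[OF x dm n le] unfolding comp_def by simp
  show ?thesis using assoc[OF c pc(1)] pc(2) by simp
qed

lemma agree_sym: "agree F G x \<Longrightarrow> agree G F x"
  unfolding agree_def by metis

lemma agree_refl:
  assumes F: "F \<in> SL L" and x: "x \<in> DF k L F"
  shows "agree F F x"
proof -
  obtain l m where lm: "(l, m) \<in> F" "inZ x m" using x unfolding DF_iff by blast
  have m: "m \<in> Mor L" using SL_D(2)[OF F lm(1)] by simp
  show ?thesis unfolding agree_def using lm deg_Om[OF m lm(2)] by blast
qed

lemma agree_trans:
  assumes F: "F \<in> SL L" and G: "G \<in> SL L" and H: "H \<in> SL L" and x: "x \<in> XL k L"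
    and a1: "agree F G x" and a2: "agree G H x"
  shows "agree F H x"
proof -
  obtain l m l' m' n where A: "(l, m) \<in> F" "(l', m') \<in> G" "inZ x m" "inZ x m'"
     "n \<in> omega_obj k (fst x)" "deg L m \<le> n" "deg L m' \<le> n"
     "cmp L l (snd x (deg L m, n)) = cmp L l' (snd x (deg L m', n))"
    using a1 unfolding agree_def by blast
  obtain l2 m2 l3 m3 n2 where B: "(l2, m2) \<in> G" "(l3, m3) \<in> H" "inZ x m2" "inZ x m3"
     "n2 \<in> omega_obj k (fst x)" "deg L m2 \<le> n2" "deg L m3 \<le> n2"
     "cmp L l2 (snd x (deg L m2, n2)) = cmp L l3 (snd x (deg L m3, n2))"
    using a2 unfolding agree_def by blast
  have e: "l2 = l' \<and> m2 = m'" using pair_uniq[OF G B(1) A(2) x B(3) A(4)] .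
  let ?N = "sup n n2"
  have N: "?N \<in> omega_obj k (fst x)" using Om_sup A(5) B(5) by blast
  have "cmp L l (snd x (deg L m, ?N)) = cmp L (cmp L l (snd x (deg L m, n))) (snd x (n, ?N))"
    using agree_mono[OF F A(1) x A(3) A(5) A(6) N] by simp
  also have "\<dots> = cmp L (cmp L l' (snd x (deg L m', n))) (snd x (n, ?N))" using A(8) by simp
  also have "\<dots> = cmp L l' (snd x (deg L m', ?N))"
    using agree_mono[OF G A(2) x A(4) A(5) A(7) N] by simp
  also have "\<dots> = cmp L (cmp L l2 (snd x (deg L m2, n2))) (snd x (n2, ?N))"
    using agree_mono[OF G B(1) x B(3) B(5) B(6) N] e by simp
  also have "\<dots> = cmp L (cmp L l3 (snd x (deg L m3, n2))) (snd x (n2, ?N))" using B(8) by simp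
  also have "\<dots> = cmp L l3 (snd x (deg L m3, ?N))"
    using agree_mono[OF H B(2) x B(4) B(5) B(7) N] by simp
  finally show ?thesis unfolding agree_def using A(1,3,6) B(2,4,7) N
    by (meson order_trans sup_ge1 sup_ge2)
qed

lemma agree_rel:
  assumes F: "F \<in> SL L" and G: "G \<in> SL L" and x: "x \<in> XL k L" and a: "agree F G x"
  shows "\<exists>P\<in>ESL L. x \<in> DF k L P \<and> smult L F P = smult L G P"
proof -
  obtain l m l' m' n where A: "(l, m) \<in> F" "(l', m') \<in> G" "inZ x m" "inZ x m'"
     "n \<in> omega_obj k (fst x)" "deg L m \<le> n" "deg L m' \<le> n"
     "cmp L l (snd x (deg L m, n)) = cmp L l' (snd x (deg L m', n))"
    using a unfolding agree_def by blast
  let ?P = "{(snd x (0, n), snd x (0, n))}"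
  have P: "?P \<in> ESL L" by (rule single_ESL[OF x A(5)])
  have "x \<in> DF k L ?P" unfolding DF_iff using x Z_self(1)[OF x A(5)] by simp
  moreover have "smult L F ?P = smult L G ?P"
    using smult_single[OF F A(1) x A(3) A(5) A(6)] smult_single[OF G A(2) x A(4) A(5) A(7)] A(8) by simp
  ultimately show ?thesis using P by blast
qed

lemma rel_agree:
  assumes F: "F \<in> SL L" and G: "G \<in> SL L" and x: "x \<in> DF k L F" and P: "P \<in> ESL L"
    and xP: "x \<in> DF k L P" and eq: "smult L F P = smult L G P"
  shows "agree F G x"
proof -
  have xX: "x \<in> XL k L" using x unfolding DF_iff by simp
  have PS: "P \<in> SL L" using P unfolding ESL_def by simp
  obtain p q where pq: "(p, q) \<in> P" "inZ x q" using xP unfolding DF_iff by blast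
  have pq': "p = q" using idem_diag[OF P pq(1)] .
  have q: "q \<in> Mor L" using SL_D(2)[OF PS pq(1)] by simp
  obtain l0 m0 where lm0: "(l0, m0) \<in> F" "inZ x m0" using x unfolding DF_iff by blast
  have m0: "m0 \<in> Mor L" using SL_D(2)[OF F lm0(1)] by simp
  let ?n = "sup (deg L m0) (deg L q)"
  note LX = Lmin_X[OF xX m0 q lm0(2) pq(2)]
  have n: "?n \<in> omega_obj k (fst x)" using Om_sup deg_Om m0 q lm0(2) pq(2) by blast
  have "(cmp L l0 (snd x (deg L m0, ?n)), cmp L q (snd x (deg L q, ?n))) \<in> smult L F P"
    unfolding smult_iff using lm0(1) pq LX(1) pq' by blast
  hence "(cmp L l0 (snd x (deg L m0, ?n)), cmp L q (snd x (deg L q, ?n))) \<in> smult L G P" using eq by simp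
  then obtain l' m' xi eta a' b' where w: "(l', m') \<in> G" "(xi, eta) \<in> P" "(a', b') \<in> Lmin L m' xi"
    "cmp L l0 (snd x (deg L m0, ?n)) = cmp L l' a'" "cmp L q (snd x (deg L q, ?n)) = cmp L eta b'"
    unfolding smult_iff by blast
  have xe: "xi = eta" using idem_diag[OF P w(2)] .
  note ab = Lmin_D[OF w(3)]
  have m': "m' \<in> Mor L" using SL_D(2)[OF G w(1)] by simp
  have c': "comp m' a'" using m' ab(1,3) unfolding comp_def by simp
  have "cmp L m' a' = snd x (0, ?n)" using ab(5) xe w(5) LX(3) by simp
  hence Zc: "inZ x (cmp L m' a')" using Z_self(1)[OF xX n] by simp
  have Zm': "inZ x m'" by (rule Z_prefix[OF xX c' Zc])
  have "deg L (cmp L m' a') = ?n" using Z_self(3)[OF xX n] \<open>cmp L m' a' = snd x (0, ?n)\<close> by simp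
  moreover have "deg L m' \<le> deg L m' + deg L a'" by (simp add: le_fun_def)
  ultimately have le': "deg L m' \<le> ?n" using comp_simps(4)[OF c'] by simp
  note ext = Z_ext[OF xX m' Zm' n le']
  have "a' = snd x (deg L m', ?n)"
    using left_cancel[OF c' ext(1)] ext(2) \<open>cmp L m' a' = snd x (0, ?n)\<close> by simp
  thus ?thesis unfolding agree_def using lm0 w(1) Zm' n le' w(4)
    by (meson sup_ge1)
qed

lemma rel_iff:
  "germ_rel k L (F, x) (G, y) \<longleftrightarrow> F \<in> SL L \<and> G \<in> SL L \<and> x \<in> DF k L F \<and> y \<in> DF k L G \<and> x = y \<and> agree F G x"
proof
  assume "germ_rel k L (F, x) (G, y)"
  hence H: "F \<in> SL L \<and> G \<in> SL L \<and> x \<in> DF k L F \<and> y \<in> DF k L G \<and> x = y \<and>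
        (\<exists>P\<in>ESL L. x \<in> DF k L P \<and> smult L F P = smult L G P)"
    unfolding germ_rel_def prod.case by (elim conjE) (intro conjI; assumption)
  then obtain P where "P \<in> ESL L" "x \<in> DF k L P" "smult L F P = smult L G P" by blast
  hence "agree F G x" using rel_agree H by blast
  thus "F \<in> SL L \<and> G \<in> SL L \<and> x \<in> DF k L F \<and> y \<in> DF k L G \<and> x = y \<and> agree F G x"
    using H by blast
next
  assume A: "F \<in> SL L \<and> G \<in> SL L \<and> x \<in> DF k L F \<and> y \<in> DF k L G \<and> x = y \<and> agree F G x"
  hence "x \<in> XL k L" unfolding DF_iff by simp
  hence "\<exists>P\<in>ESL L. x \<in> DF k L P \<and> smult L F P = smult L G P" using A agree_rel by blast
  thus "germ_rel k L (F, x) (G, y)" unfolding germ_rel_def prod.case using A by blast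
qed

lemma germ_self: "F \<in> SL L \<Longrightarrow> x \<in> DF k L F \<Longrightarrow> (F, x) \<in> germ k L F x"
  unfolding germ_def mem_Collect_eq rel_iff using agree_refl by blast

lemma germ_eq_iff:
  assumes F: "F \<in> SL L" "x \<in> DF k L F" and G: "G \<in> SL L" "y \<in> DF k L G"
  shows "germ k L F x = germ k L G y \<longleftrightarrow> x = y \<and> agree F G x"
proof
  assume "germ k L F x = germ k L G y"
  hence "(G, y) \<in> germ k L F x" using germ_self[OF G] by simp
  thus "x = y \<and> agree F G x" unfolding germ_def mem_Collect_eq rel_iff by blast
next
  assume A: "x = y \<and> agree F G x"
  have xX: "x \<in> XL k L" using F(2) unfolding DF_iff by simp
  show "germ k L F x = germ k L G y"
  proof (rule set_eqI)
    fix Kz :: "('a \<times> 'a) set \<times> 'a path"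
    obtain K z where Kz: "Kz = (K, z)" by (cases Kz)
    show "Kz \<in> germ k L F x \<longleftrightarrow> Kz \<in> germ k L G y"
      unfolding germ_def Kz mem_Collect_eq rel_iff
      using A F G agree_trans[OF _ _ _ xX] agree_sym by metis
  qed
qed

lemma germ_eq_D:
  assumes F: "F \<in> SL L" "x \<in> DF k L F" and G: "G \<in> SL L" "y \<in> DF k L G"
    and "germ k L F x = germ k L G y"
  shows "x = y"
  using germ_eq_iff[OF F G] assms(5) by simp

end

context kg
begin

lemma Om_le_fun:
  assumes "\<forall>n\<in>omega_obj k a. n \<in> omega_obj k b" "\<forall>i\<ge>k. a i = 0"
  shows "a i \<le> b i"
proof (cases "i \<ge> k")
  case True thus ?thesis using assms(2) by simp
next
  case False
  show ?thesis
  proof (rule ccontr)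
    assume "\<not> a i \<le> b i"
    hence lt: "b i < a i" by simp
    then obtain c where c: "b i = enat c" by (cases "b i") auto
    have "enat (Suc c) \<le> a i" using lt c by (simp add: Suc_ile_eq)
    define n where "n = (\<lambda>j. if j = i then Suc c else (0::nat))"
    have "n \<in> omega_obj k a" unfolding omega_obj_def n_def using False \<open>enat (Suc c) \<le> a i\<close>
      by (auto simp: zero_enat_def[symmetric])
    hence "n \<in> omega_obj k b" using assms(1) by blast
    hence "enat (n i) \<le> b i" unfolding omega_obj_def by blast
    thus False using c unfolding n_def by simp
  qed
qed

lemma path_eq:
  assumes x: "x \<in> XL k L" and y: "y \<in> XL k L"
    and A: "\<forall>n\<in>omega_obj k (fst x). n \<in> omega_obj k (fst y) \<and> snd y (0, n) = snd x (0, n)"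
    and B: "\<forall>n\<in>omega_obj k (fst y). n \<in> omega_obj k (fst x) \<and> snd x (0, n) = snd y (0, n)"
  shows "x = y"
proof -
  have "fst x i \<le> fst y i" for i using Om_le_fun[of "fst x" "fst y"] A path_hi[OF x] by blast
  moreover have "fst y i \<le> fst x i" for i using Om_le_fun[of "fst y" "fst x"] B path_hi[OF y] by blast
  ultimately have f: "fst x = fst y" by (intro ext antisym)
  have "snd x pq = snd y pq" for pq
  proof -
    obtain p q where pq: "pq = (p, q)" by (cases pq)
    show ?thesis
    proof (cases "omega_mor k (fst x) p q")
      case True
      hence o: "p \<in> omega_obj k (fst x)" "q \<in> omega_obj k (fst x)" "p \<le> q" unfolding omega_mor_def by simp_all
      have oy: "p \<in> omega_obj k (fst y)" "q \<in> omega_obj k (fst y)" using o f by simp_all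
      note cx = path_cmp[OF x Om_0 o(1) o(2) _ o(3)] and cy = path_cmp[OF y Om_0 oy(1) oy(2) _ o(3)]
      have "snd x (0, p) = snd y (0, p)" "snd x (0, q) = snd y (0, q)" using A o by auto
      hence "cmp L (snd x (0, p)) (snd x (p, q)) = cmp L (snd x (0, p)) (snd y (p, q))"
        using cx(2) cy(2) by simp
      hence "snd x (p, q) = snd y (p, q)"
        using left_cancel[OF cx(1)] cy(1) \<open>snd x (0, p) = snd y (0, p)\<close> by simp
      thus ?thesis using pq by simp
    next
      case False
      thus ?thesis using path_undef[OF x False] path_undef[OF y] f pq by simp
    qed
  qed
  thus ?thesis using f by (simp add: prod_eq_iff fun_eq_iff)
qed

lemma comp_le:
  assumes F: "F \<in> SL L" and lm: "(l, m) \<in> F" and x: "x \<in> XL k L" and Z: "inZ x m"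
    and n: "n \<in> omega_obj k (fst x)" and le: "deg L m \<le> n"
  shows "comp l (snd x (deg L m, n))"
proof -
  have lmM: "l \<in> Mor L" "m \<in> Mor L" "src L l = src L m" using SL_D(2)[OF F lm] by simp_all
  have dm: "deg L m \<in> omega_obj k (fst x)" by (rule deg_Om[OF lmM(2) Z])
  have "src L m = snd x (deg L m, deg L m)" using path_props(4)[OF x Om_0 dm] Z unfolding inZ_def by simp
  also have "\<dots> = rng L (snd x (deg L m, n))" using path_props(3)[OF x dm n le] by simp
  finally show ?thesis using lmM path_props(1)[OF x dm n le] unfolding comp_def by simp
qed

lemma single_SL2: "a \<in> Mor L \<Longrightarrow> b \<in> Mor L \<Longrightarrow> src L a = src L b \<Longrightarrow> {(a, b)} \<in> SL L"
  unfolding SL_def by simp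

lemma Psi_I: "H \<in> SL L \<Longrightarrow> x \<in> DF k L H \<Longrightarrow> germ k L F x = germ k L H x \<Longrightarrow> germ k L F x \<in> Psi k L H"
  by (cases x) (auto simp: Psi_def)

lemma Psi_D:
  assumes F: "F \<in> SL L" "x \<in> DF k L F" and H: "H \<in> SL L" and g: "germ k L F x \<in> Psi k L H"
  shows "x \<in> DF k L H \<and> agree F H x"
proof -
  obtain z where z: "z \<in> DF k L H" "germ k L F x = germ k L H z" using g unfolding Psi_def by blast
  have "x = z \<and> agree F H x" using germ_eq_iff[OF F H z(1)] z(2) by blast
  thus ?thesis using z(1) by blast
qed

lemma sep_lemma:
  assumes F: "F \<in> SL L" "x \<in> DF k L F" and G: "G \<in> SL L" "y \<in> DF k L G"
    and n: "n \<in> omega_obj k (fst x)" and nn: "\<not> (n \<in> omega_obj k (fst y) \<and> snd y (0, n) = snd x (0, n))"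
  shows "\<exists>H\<in>SL L. germ k L F x \<in> Psi k L H \<and> germ k L G y \<notin> Psi k L H"
proof -
  have x: "x \<in> XL k L" using F(2) unfolding DF_iff by simp
  have yX: "y \<in> XL k L" using G(2) unfolding DF_iff by simp
  obtain l m where lm: "(l, m) \<in> F" "inZ x m" using F(2) unfolding DF_iff by blast
  have lmM: "l \<in> Mor L" "m \<in> Mor L" "src L l = src L m" using SL_D(2)[OF F(1) lm(1)] by simp_all
  let ?n = "sup n (deg L m)"
  have n': "?n \<in> omega_obj k (fst x)" using Om_sup n deg_Om[OF lmM(2) lm(2)] by blast
  let ?e = "snd x (deg L m, ?n)" and ?\<mu> = "snd x (0, ?n)"
  have c: "comp l ?e" by (rule comp_le[OF F(1) lm(1) x lm(2) n'], simp)
  have mu: "?\<mu> \<in> Mor L" "deg L ?\<mu> = ?n" "inZ x ?\<mu>" using Z_self[OF x n'] by simp_all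
  have dm: "deg L m \<in> omega_obj k (fst x)" by (rule deg_Om[OF lmM(2) lm(2)])
  have se: "src L ?e = snd x (?n, ?n)" using path_props(4)[OF x dm n'] by simp
  have smu: "src L ?\<mu> = snd x (?n, ?n)" using path_props(4)[OF x Om_0 n'] by simp
  let ?H = "{(cmp L l ?e, ?\<mu>)}"
  have H: "?H \<in> SL L" using single_SL2 comp_simps(1,3)[OF c] mu(1) se smu by simp
  have xH: "x \<in> DF k L ?H" unfolding DF_iff using x mu(3) by simp
  have eqA: "cmp L l (snd x (deg L m, ?n)) = cmp L (cmp L l ?e) (snd x (deg L ?\<mu>, ?n))"
    using mu(2) se unit_r[OF comp_simps(1)[OF c]] comp_simps(3)[OF c] by simp
  have "agree F ?H x" unfolding agree_def
    by (rule exI[of _ l], rule exI[of _ m], rule exI[of _ "cmp L l ?e"], rule exI[of _ ?\<mu>], rule exI[of _ ?n])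
       (use eqA lm mu n' in simp)
  hence "germ k L F x = germ k L ?H x" using germ_eq_iff[OF F H xH] by simp
  hence in1: "germ k L F x \<in> Psi k L ?H" by (rule Psi_I[OF H xH])
  have "germ k L G y \<notin> Psi k L ?H"
  proof
    assume "germ k L G y \<in> Psi k L ?H"
    hence "y \<in> DF k L ?H" using Psi_D[OF G H] by simp
    hence Zy: "inZ y ?\<mu>" unfolding DF_iff by simp
    have le: "n \<le> ?n" by simp
    note pc = path_cmp[OF x Om_0 n n' _ le]
    have nO: "snd x (0, n) \<in> Mor L" "deg L (snd x (0, n)) = n" using Z_self[OF x n] by simp_all
    have "inZ y (snd x (0, n))" using Z_prefix[OF yX pc(1)] Zy pc(2) by simp
    hence "n \<in> omega_obj k (fst y) \<and> snd y (0, n) = snd x (0, n)"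
      using deg_Om[OF nO(1)] nO(2) unfolding inZ_def by metis
    thus False using nn by simp
  qed
  thus ?thesis using in1 H by blast
qed

lemma key:
  assumes F: "F \<in> SL L" and lm: "(l, m) \<in> F" and x: "x \<in> XL k L" and Z: "inZ x m" and H: "H \<in> SL L"
  shows "germ k L F x \<in> Psi k L H \<longleftrightarrow>
    (\<exists>l' m' a a'. (l', m') \<in> H \<and> (a, a') \<in> Lmin L m m' \<and> cmp L l a = cmp L l' a' \<and> inZ x (cmp L m a))"
proof -
  have xF: "x \<in> DF k L F" unfolding DF_iff using x lm Z by blast
  have lmM: "l \<in> Mor L" "m \<in> Mor L" "src L l = src L m" using SL_D(2)[OF F lm] by simp_all
  show ?thesis
  proof
    assume "germ k L F x \<in> Psi k L H"
    hence ag: "agree F H x" using Psi_D[OF F xF H] by simp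
    obtain l1 m1 l' m' n where A: "(l1, m1) \<in> F" "(l', m') \<in> H" "inZ x m1" "inZ x m'"
       "n \<in> omega_obj k (fst x)" "deg L m1 \<le> n" "deg L m' \<le> n"
       "cmp L l1 (snd x (deg L m1, n)) = cmp L l' (snd x (deg L m', n))"
      using ag unfolding agree_def by blast
    have e: "l1 = l \<and> m1 = m" using pair_uniq[OF F A(1) lm x A(3) Z] .
    have m': "m' \<in> Mor L" using SL_D(2)[OF H A(2)] by simp
    let ?n = "sup (deg L m) (deg L m')"
    let ?a = "snd x (deg L m, ?n)" and ?a' = "snd x (deg L m', ?n)"
    note LX = Lmin_X[OF x lmM(2) m' Z A(4)]
    have n0: "?n \<in> omega_obj k (fst x)" using Om_sup deg_Om lmM(2) m' Z A(4) by blast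
    have len: "?n \<le> n" using A(6,7) e by simp
    have "cmp L l (snd x (deg L m, n)) = cmp L (cmp L l ?a) (snd x (?n, n))"
      by (rule agree_mono[OF F lm x Z n0 _ A(5) len]) simp
    moreover have "cmp L l' (snd x (deg L m', n)) = cmp L (cmp L l' ?a') (snd x (?n, n))"
      by (rule agree_mono[OF H A(2) x A(4) n0 _ A(5) len]) simp
    ultimately have eq: "cmp L (cmp L l ?a) (snd x (?n, n)) = cmp L (cmp L l' ?a') (snd x (?n, n))"
      using A(8) e by simp
    have c1: "comp l ?a" by (rule comp_le[OF F lm x Z n0]) simp
    have c2: "comp l' ?a'" by (rule comp_le[OF H A(2) x A(4) n0]) simp
    have dm: "deg L m \<in> omega_obj k (fst x)" "deg L m' \<in> omega_obj k (fst x)"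
      using deg_Om lmM(2) m' Z A(4) by blast+
    have s1: "src L ?a = snd x (?n, ?n)" using path_props(4)[OF x dm(1) n0] by simp
    have s2: "src L ?a' = snd x (?n, ?n)" using path_props(4)[OF x dm(2) n0] by simp
    have r: "rng L (snd x (?n, n)) = snd x (?n, ?n)" "snd x (?n, n) \<in> Mor L"
      using path_props[OF x n0 A(5) len] by simp_all
    have cc1: "comp (cmp L l ?a) (snd x (?n, n))" using comp_simps(1,3)[OF c1] s1 r unfolding comp_def by simp
    have cc2: "comp (cmp L l' ?a') (snd x (?n, n))" using comp_simps(1,3)[OF c2] s2 r unfolding comp_def by simp
    have "cmp L l ?a = cmp L l' ?a'" by (rule right_cancel[OF cc1 cc2 eq])
    moreover have "inZ x (cmp L m ?a)" using LX(2) Z_self(1)[OF x n0] by simp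
    ultimately show "\<exists>l' m' a a'. (l', m') \<in> H \<and> (a, a') \<in> Lmin L m m' \<and> cmp L l a = cmp L l' a' \<and> inZ x (cmp L m a)"
      using A(2) LX(1) by blast
  next
    assume "\<exists>l' m' a a'. (l', m') \<in> H \<and> (a, a') \<in> Lmin L m m' \<and> cmp L l a = cmp L l' a' \<and> inZ x (cmp L m a)"
    then obtain l' m' a a' where B: "(l', m') \<in> H" "(a, a') \<in> Lmin L m m'" "cmp L l a = cmp L l' a'"
      "inZ x (cmp L m a)" by blast
    note ab = Lmin_D[OF B(2)]
    have m': "m' \<in> Mor L" using SL_D(2)[OF H B(1)] by simp
    have c1: "comp m a" using lmM ab(1,3) unfolding comp_def by simp
    have c2: "comp m' a'" using m' ab(2,4) unfolding comp_def by simp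
    have Zm': "inZ x m'" using Z_prefix[OF x c2] B(4) ab(5) by simp
    have xH: "x \<in> DF k L H" unfolding DF_iff using x B(1) Zm' by blast
    let ?n = "deg L (cmp L m a)"
    have n0: "?n \<in> omega_obj k (fst x)" using deg_Om[OF comp_simps(1)[OF c1] B(4)] .
    have len: "?n = sup (deg L m) (deg L m')" by (rule ab(6))
    have le1: "deg L m \<le> ?n" and le2: "deg L m' \<le> ?n" using len by simp_all
    have mu: "snd x (0, ?n) = cmp L m a" using B(4) unfolding inZ_def by simp
    note e1 = Z_ext[OF x lmM(2) Z n0 le1] and e2 = Z_ext[OF x m' Zm' n0 le2]
    have a1: "snd x (deg L m, ?n) = a" using left_cancel[OF e1(1) c1] e1(2) mu by simp
    have a2: "snd x (deg L m', ?n) = a'" using left_cancel[OF e2(1) c2] e2(2) mu ab(5) by simp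
    have "agree F H x" unfolding agree_def
      by (rule exI[of _ l], rule exI[of _ m], rule exI[of _ l'], rule exI[of _ m'], rule exI[of _ ?n])
         (use lm B(1) Z Zm' n0 le1 le2 a1 a2 B(3) in simp)
    hence "germ k L F x = germ k L H x" using germ_eq_iff[OF F xF H xH] by simp
    thus "germ k L F x \<in> Psi k L H" by (rule Psi_I[OF H xH])
  qed
qed

end

context kg
begin

definition dec :: "'a \<Rightarrow> (nat \<Rightarrow> nat) \<Rightarrow> (nat \<Rightarrow> nat) \<Rightarrow> 'a \<Rightarrow> 'a \<Rightarrow> 'a \<Rightarrow> bool" where
  "dec l p q a b e \<longleftrightarrow> comp a b \<and> comp (cmp L a b) e \<and> l = cmp L (cmp L a b) e \<and> deg L a = p \<and> deg L b = q - p"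

definition seg :: "'a \<Rightarrow> (nat \<Rightarrow> nat) \<Rightarrow> (nat \<Rightarrow> nat) \<Rightarrow> 'a" where
  "seg l p q = (THE b. \<exists>a e. dec l p q a b e)"

lemma fun_split: "(p::nat\<Rightarrow>nat) \<le> q \<Longrightarrow> q = p + (q - p)"
  by (auto simp: fun_eq_iff le_fun_def)

lemma seg_ex:
  assumes l: "l \<in> Mor L" and pq: "p \<le> q" and ql: "q \<le> deg L l"
  shows "\<exists>a b e. dec l p q a b e"
proof -
  obtain u e where ue: "comp u e" "deg L u = q" "l = cmp L u e"
    using fact_ex[OF l fun_split[OF ql]] by metis
  have u: "u \<in> Mor L" using ue(1) by (simp add: comp_def)
  obtain a b where ab: "comp a b" "deg L a = p" "deg L b = q - p" "u = cmp L a b"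
    using fact_ex[OF u] fun_split[OF pq] ue(2) by metis
  show ?thesis unfolding dec_def using ab ue by blast
qed

lemma seg_uniq:
  assumes "dec l p q a b e" "dec l p q a' b' e'" shows "b = b'"
proof -
  have d: "deg L (cmp L a b) = deg L (cmp L a' b')"
    using assms comp_simps(4) unfolding dec_def by metis
  have "cmp L a b = cmp L a' b'" using fact_uniq[of "cmp L a b" e "cmp L a' b'" e'] assms d
    unfolding dec_def by metis
  thus ?thesis using fact_uniq[of a b a' b'] assms unfolding dec_def by metis
qed

lemma seg_char: "dec l p q a b e \<Longrightarrow> seg l p q = b"
  unfolding seg_def using seg_uniq by blast

lemma dec_facts:
  assumes "dec l p q a b e"
  shows "b \<in> Mor L" "deg L b = q - p"
  using assms unfolding dec_def comp_def by auto

lemma seg_M: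
  assumes l: "l \<in> Mor L" and pq: "p \<le> q" and ql: "q \<le> deg L l"
  shows "seg l p q \<in> Mor L" "deg L (seg l p q) = q - p"
proof -
  obtain a b e where "dec l p q a b e" using seg_ex[OF assms] by blast
  thus "seg l p q \<in> Mor L" "deg L (seg l p q) = q - p" using seg_char dec_facts by auto
qed

lemma seg_cmp:
  assumes l: "l \<in> Mor L" and pq: "p \<le> q" and qt: "q \<le> t" and tl: "t \<le> deg L l"
  shows "comp (seg l p q) (seg l q t)" "cmp L (seg l p q) (seg l q t) = seg l p t"
proof -
  have pt: "p \<le> t" using pq qt by (rule order_trans)
  obtain a bc e where D: "dec l p t a bc e" using seg_ex[OF l pt tl] by blast
  have abc: "comp a bc" "comp (cmp L a bc) e" "l = cmp L (cmp L a bc) e" "deg L a = p" "deg L bc = t - p"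
    using D unfolding dec_def by simp_all
  have bcM: "bc \<in> Mor L" using abc(1) by (simp add: comp_def)
  have "t - p = (q - p) + (t - q)" using pq qt by (auto simp: fun_eq_iff le_fun_def)
  then obtain b c where bc: "comp b c" "deg L b = q - p" "deg L c = t - q" "bc = cmp L b c"
    using fact_ex[OF bcM] abc(5) by metis
  have ab: "comp a b" using abc(1) bc(1,4) comp_simps(2)[OF bc(1)] unfolding comp_def by simp
  have abc2: "comp (cmp L a b) c" using ab bc(1) comp_simps(1,3)[OF ab] unfolding comp_def by simp
  have assoc1: "cmp L a bc = cmp L (cmp L a b) c" using assoc[OF ab bc(1)] bc(4) by simp
  have ce: "comp c e" using abc(2) assoc1 comp_simps(3)[OF abc2] bc(1) unfolding comp_def by simp
  have l2: "l = cmp L (cmp L a b) (cmp L c e)" using abc(3) assoc1 assoc[OF abc2 ce] by simp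
  have abce: "comp (cmp L a b) (cmp L c e)" using abc2 ce comp_simps(1,2)[OF ce] unfolding comp_def by simp
  have "dec l p q a b (cmp L c e)" unfolding dec_def using ab abce l2 abc(4) bc(2) by simp
  hence s1: "seg l p q = b" by (rule seg_char)
  have dab: "deg L (cmp L a b) = q" using comp_simps(4)[OF ab] abc(4) bc(2) pq
    by (auto simp: fun_eq_iff le_fun_def)
  have "dec l q t (cmp L a b) c e" unfolding dec_def
    using abc2 abc(2) assoc1 abc(3) dab bc(3) by simp
  hence s2: "seg l q t = c" by (rule seg_char)
  have s3: "seg l p t = bc" using seg_char[OF D] .
  show "comp (seg l p q) (seg l q t)" using s1 s2 bc(1) by simp
  show "cmp L (seg l p q) (seg l q t) = seg l p t" using s1 s2 s3 bc(4) by simp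
qed

lemma seg_vertex:
  assumes l: "l \<in> Mor L" and ql: "q \<le> deg L l"
  shows "rng L (seg l q q) = seg l q q" "src L (seg l q q) = seg l q q"
proof -
  have "seg l q q \<in> Mor L" "deg L (seg l q q) = 0" using seg_M[OF l order_refl ql] by simp_all
  thus "rng L (seg l q q) = seg l q q" "src L (seg l q q) = seg l q q" using deg0 by auto
qed

lemma seg_rng_src:
  assumes l: "l \<in> Mor L" and pq: "p \<le> q" and ql: "q \<le> deg L l"
  shows "rng L (seg l p q) = seg l p p" "src L (seg l p q) = seg l q q"
proof -
  have pl: "p \<le> deg L l" using pq ql by (rule order_trans)
  have "comp (seg l p p) (seg l p q)" using seg_cmp[OF l order_refl pq ql] by simp
  thus "rng L (seg l p q) = seg l p p" using seg_vertex[OF l pl] unfolding comp_def by simp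
  have "comp (seg l p q) (seg l q q)" using seg_cmp[OF l pq order_refl ql] by simp
  thus "src L (seg l p q) = seg l q q" using seg_vertex[OF l ql] unfolding comp_def by simp
qed

lemma seg_ext:
  assumes c: "comp l a'" and pq: "p \<le> q" and ql: "q \<le> deg L l"
  shows "seg (cmp L l a') p q = seg l p q"
proof -
  have l: "l \<in> Mor L" using c by (simp add: comp_def)
  obtain a b e where D: "dec l p q a b e" using seg_ex[OF l pq ql] by blast
  have d: "comp a b" "comp (cmp L a b) e" "l = cmp L (cmp L a b) e" "deg L a = p" "deg L b = q - p"
    using D unfolding dec_def by simp_all
  have ea: "comp e a'" using c d(2,3) comp_simps(3)[OF d(2)] unfolding comp_def by simp
  have "comp (cmp L a b) (cmp L e a')" using d(2) ea comp_simps(1,2)[OF ea] unfolding comp_def by simp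
  moreover have "cmp L l a' = cmp L (cmp L a b) (cmp L e a')" using d(3) assoc[OF d(2) ea] by simp
  ultimately have "dec (cmp L l a') p q a b (cmp L e a')" unfolding dec_def using d by simp
  thus ?thesis using seg_char D by simp
qed

lemma seg_full:
  assumes l: "l \<in> Mor L" shows "seg l 0 (deg L l) = l"
proof -
  have "comp (rng L l) l" "comp (cmp L (rng L l) l) (src L l)"
    using comp_rng[OF l] comp_src[OF l] unit_l[OF l] by simp_all
  moreover have "l = cmp L (cmp L (rng L l) l) (src L l)" using unit_l[OF l] unit_r[OF l] by simp
  ultimately have "dec l 0 (deg L l) (rng L l) l (src L l)" unfolding dec_def using deg_vertex[OF l] by simp
  thus ?thesis by (rule seg_char)
qed

lemma seg_prefix:
  assumes l: "l \<in> Mor L" and nl: "n \<le> deg L l"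
  shows "comp (seg l 0 n) (seg l n (deg L l))" "cmp L (seg l 0 n) (seg l n (deg L l)) = l"
  using seg_cmp[OF l _ nl order_refl] seg_full[OF l] by (simp_all add: le_fun_def)

end

lemma enat_le_SUP:
  assumes "enat c \<le> (SUP \<mu>\<in>A. enat (f \<mu>))" "A \<noteq> {}"
  shows "\<exists>\<mu>\<in>A. c \<le> f \<mu>"
proof (cases c)
  case 0 thus ?thesis using assms(2) by blast
next
  case (Suc c')
  hence "enat c' < (SUP \<mu>\<in>A. enat (f \<mu>))" using assms(1) by (simp add: Suc_ile_eq)
  hence "\<exists>\<mu>\<in>A. enat c' < enat (f \<mu>)" by (simp only: less_SUP_iff)
  then obtain \<mu> where mu: "\<mu> \<in> A" "enat c' < enat (f \<mu>)" by blast
  hence "c \<le> f \<mu>" using Suc by simp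
  thus ?thesis using mu(1) by blast
qed

context kg
begin

definition good :: "'a \<Rightarrow> ('a \<Rightarrow> bool) \<Rightarrow> bool" where
  "good m S \<longleftrightarrow> S m \<and> (\<forall>a. S a \<longrightarrow> a \<in> Mor L) \<and> (\<forall>a b. comp a b \<longrightarrow> S (cmp L a b) \<longrightarrow> S a) \<and>
     (\<forall>a b. a \<in> Mor L \<longrightarrow> b \<in> Mor L \<longrightarrow> S a \<longrightarrow> S b \<longrightarrow> (\<exists>\<alpha> \<beta>. (\<alpha>, \<beta>) \<in> Lmin L a b \<and> S (cmp L a \<alpha>)))"

definition dS :: "('a \<Rightarrow> bool) \<Rightarrow> nat \<Rightarrow> enat" where
  "dS S = (\<lambda>i. SUP \<mu>\<in>Collect S. enat (deg L \<mu> i))"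

definition wit :: "('a \<Rightarrow> bool) \<Rightarrow> (nat \<Rightarrow> nat) \<Rightarrow> 'a" where
  "wit S q = (SOME \<mu>. S \<mu> \<and> q \<le> deg L \<mu>)"

definition pth :: "('a \<Rightarrow> bool) \<Rightarrow> 'a path" where
  "pth S = (dS S, \<lambda>(p, q). if omega_mor k (dS S) p q then seg (wit S q) p q else undefined)"

lemma goodD:
  assumes "good m S"
  shows "S m" "\<And>a. S a \<Longrightarrow> a \<in> Mor L" "\<And>a b. comp a b \<Longrightarrow> S (cmp L a b) \<Longrightarrow> S a"
    "\<And>a b. S a \<Longrightarrow> S b \<Longrightarrow> \<exists>\<alpha> \<beta>. (\<alpha>, \<beta>) \<in> Lmin L a b \<and> S (cmp L a \<alpha>)"
  using assms unfolding good_def by blast+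

lemma good_join:
  assumes g: "good m S" and a: "S a" and b: "S b"
  shows "\<exists>\<nu>. S \<nu> \<and> deg L a \<le> deg L \<nu> \<and> deg L b \<le> deg L \<nu>"
proof -
  obtain \<alpha> \<beta> where ab: "(\<alpha>, \<beta>) \<in> Lmin L a b" "S (cmp L a \<alpha>)" using goodD(4)[OF g a b] by blast
  thus ?thesis using Lmin_D(6)[OF ab(1)] by (intro exI[of _ "cmp L a \<alpha>"]) simp
qed

lemma good_exists:
  assumes g: "good m S" and q: "q \<in> omega_obj k (dS S)"
  shows "\<exists>\<mu>. S \<mu> \<and> q \<le> deg L \<mu>"
proof -
  have ne: "Collect S \<noteq> {}" using goodD(1)[OF g] by blast
  have "\<exists>\<mu>. S \<mu> \<and> (\<forall>i<j. q i \<le> deg L \<mu> i)" for j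
  proof (induction j)
    case 0 thus ?case using goodD(1)[OF g] by blast
  next
    case (Suc j)
    then obtain \<mu> where mu: "S \<mu>" "\<forall>i<j. q i \<le> deg L \<mu> i" by blast
    have "enat (q j) \<le> (SUP \<mu>\<in>Collect S. enat (deg L \<mu> j))" using q unfolding omega_obj_def dS_def by blast
    from enat_le_SUP[OF this ne] obtain \<mu>' where mu': "S \<mu>'" "q j \<le> deg L \<mu>' j" by blast
    obtain \<nu> where nu: "S \<nu>" "deg L \<mu> \<le> deg L \<nu>" "deg L \<mu>' \<le> deg L \<nu>"
      using good_join[OF g mu(1) mu'(1)] by blast
    have "\<forall>i<Suc j. q i \<le> deg L \<nu> i"
    proof (intro allI impI)
      fix i assume "i < Suc j"
      hence "i < j \<or> i = j" by auto
      thus "q i \<le> deg L \<nu> i"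
      proof
        assume "i < j" thus ?thesis using mu(2) nu(2) unfolding le_fun_def by (meson le_trans)
      next
        assume "i = j" thus ?thesis using mu'(2) nu(3) unfolding le_fun_def by (meson le_trans)
      qed
    qed
    thus ?case using nu(1) by blast
  qed
  then obtain \<mu> where mu: "S \<mu>" "\<forall>i<k. q i \<le> deg L \<mu> i" by blast
  have "q i \<le> deg L \<mu> i" for i
  proof (cases "i < k")
    case True thus ?thesis using mu(2) by simp
  next
    case False thus ?thesis using q unfolding omega_obj_def by simp
  qed
  thus ?thesis using mu(1) by (auto simp: le_fun_def)
qed

lemma wit:
  assumes g: "good m S" and q: "q \<in> omega_obj k (dS S)"
  shows "S (wit S q)" "q \<le> deg L (wit S q)"
  using someI_ex[OF good_exists[OF g q]] unfolding wit_def by simp_all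

lemma indep:
  assumes g: "good m S" and mu: "S \<mu>" "S \<mu>'" and pq: "p \<le> q" and le: "q \<le> deg L \<mu>" "q \<le> deg L \<mu>'"
  shows "seg \<mu> p q = seg \<mu>' p q"
proof -
  obtain \<alpha> \<beta> where ab: "(\<alpha>, \<beta>) \<in> Lmin L \<mu> \<mu>'" using goodD(4)[OF g mu] by blast
  note d = Lmin_D[OF ab]
  have M: "\<mu> \<in> Mor L" "\<mu>' \<in> Mor L" using goodD(2)[OF g] mu by auto
  have c1: "comp \<mu> \<alpha>" and c2: "comp \<mu>' \<beta>" using M d unfolding comp_def by simp_all
  have "seg \<mu> p q = seg (cmp L \<mu> \<alpha>) p q" using seg_ext[OF c1 pq le(1)] by simp
  also have "\<dots> = seg (cmp L \<mu>' \<beta>) p q" using d(5) by simp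
  also have "\<dots> = seg \<mu>' p q" using seg_ext[OF c2 pq le(2)] by simp
  finally show ?thesis .
qed

lemma pth_snd:
  assumes g: "good m S" and o: "omega_mor k (dS S) p q" and mu: "S \<mu>" "q \<le> deg L \<mu>"
  shows "snd (pth S) (p, q) = seg \<mu> p q"
proof -
  have q: "q \<in> omega_obj k (dS S)" and pq: "p \<le> q" using o unfolding omega_mor_def by simp_all
  have "snd (pth S) (p, q) = seg (wit S q) p q" unfolding pth_def using o by simp
  also have "\<dots> = seg \<mu> p q" using indep[OF g wit(1)[OF g q] mu(1) pq wit(2)[OF g q] mu(2)] .
  finally show ?thesis .
qed

lemma dS_hi:
  assumes g: "good m S" and i: "i \<ge> k"
  shows "dS S i = 0"
proof -
  have "dS S i \<le> 0" unfolding dS_def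
  proof (rule SUP_least)
    fix \<mu> assume "\<mu> \<in> Collect S"
    hence "deg L \<mu> i = 0" using goodD(2)[OF g] deg_hi i by simp
    thus "enat (deg L \<mu> i) \<le> 0" by (simp add: zero_enat_def)
  qed
  thus ?thesis by simp
qed

lemma dS_upper:
  assumes "S \<nu>" shows "enat (deg L \<nu> i) \<le> dS S i"
  unfolding dS_def using assms by (auto intro: SUP_upper)

lemma pth_XL:
  assumes g: "good m S"
  shows "pth S \<in> XL k L"
proof -
  let ?D = "dS S"
  have fst: "fst (pth S) = ?D" unfolding pth_def by simp
  have P2: "snd (pth S) (p, q) \<in> Mor L \<and> deg L (snd (pth S) (p, q)) = q - p \<and>
        rng L (snd (pth S) (p, q)) = snd (pth S) (p, p) \<and> src L (snd (pth S) (p, q)) = snd (pth S) (q, q)"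
    if o: "omega_mor k ?D p q" for p q
  proof -
    have q: "q \<in> omega_obj k ?D" and pq: "p \<le> q" and p: "p \<in> omega_obj k ?D" using o unfolding omega_mor_def by simp_all
    let ?\<mu> = "wit S q"
    have mu: "S ?\<mu>" "q \<le> deg L ?\<mu>" using wit[OF g q] by simp_all
    have M: "?\<mu> \<in> Mor L" using goodD(2)[OF g mu(1)] .
    have e1: "snd (pth S) (p, q) = seg ?\<mu> p q" by (rule pth_snd[OF g o mu])
    have e2: "snd (pth S) (p, p) = seg ?\<mu> p p"
      by (rule pth_snd[OF g _ mu(1)]) (use p pq mu(2) in \<open>auto simp: omega_mor_def intro: order_trans\<close>)
    have e3: "snd (pth S) (q, q) = seg ?\<mu> q q"
      by (rule pth_snd[OF g _ mu(1)]) (use q mu(2) in \<open>auto simp: omega_mor_def\<close>)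
    show ?thesis using e1 e2 e3 seg_M[OF M pq mu(2)] seg_rng_src[OF M pq mu(2)] by simp
  qed
  have P3: "cmp L (snd (pth S) (p, q)) (snd (pth S) (q, t)) = snd (pth S) (p, t)"
    if o1: "omega_mor k ?D p q" and o2: "omega_mor k ?D q t" for p q t
  proof -
    have t: "t \<in> omega_obj k ?D" and pq: "p \<le> q" and qt: "q \<le> t" using o1 o2 unfolding omega_mor_def by simp_all
    let ?\<mu> = "wit S t"
    have mu: "S ?\<mu>" "t \<le> deg L ?\<mu>" using wit[OF g t] by simp_all
    have M: "?\<mu> \<in> Mor L" using goodD(2)[OF g mu(1)] .
    have o3: "omega_mor k ?D p t" using o1 o2 unfolding omega_mor_def by (auto intro: order_trans)
    have e1: "snd (pth S) (p, q) = seg ?\<mu> p q" by (rule pth_snd[OF g o1 mu(1)]) (use qt mu(2) in simp)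
    have e2: "snd (pth S) (q, t) = seg ?\<mu> q t" by (rule pth_snd[OF g o2 mu])
    have e3: "snd (pth S) (p, t) = seg ?\<mu> p t" by (rule pth_snd[OF g o3 mu])
    show ?thesis using e1 e2 e3 seg_cmp[OF M pq qt mu(2)] by simp
  qed
  have P4: "snd (pth S) (p, q) = undefined" if "\<not> omega_mor k ?D p q" for p q
    unfolding pth_def using that by simp
  show ?thesis unfolding XL_def is_path_def mem_Collect_eq fst
    using dS_hi[OF g] P2 P3 P4 by blast
qed

lemma pth_inZ:
  assumes g: "good m S" and nu: "\<nu> \<in> Mor L"
  shows "inZ (pth S) \<nu> \<longleftrightarrow> S \<nu>"
proof
  assume Z: "inZ (pth S) \<nu>"
  have x: "pth S \<in> XL k L" by (rule pth_XL[OF g])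
  have dn: "deg L \<nu> \<in> omega_obj k (dS S)" using deg_Om[OF nu Z] unfolding pth_def by simp
  obtain \<mu> where mu: "S \<mu>" "deg L \<nu> \<le> deg L \<mu>" using good_exists[OF g dn] by blast
  have M: "\<mu> \<in> Mor L" using goodD(2)[OF g mu(1)] .
  have o: "omega_mor k (dS S) 0 (deg L \<nu>)" using dn Om_0 unfolding omega_mor_def by (simp add: le_fun_def)
  have "\<nu> = seg \<mu> 0 (deg L \<nu>)" using pth_snd[OF g o mu] Z unfolding inZ_def by simp
  thus "S \<nu>" using goodD(3)[OF g seg_prefix(1)[OF M mu(2)]] seg_prefix(2)[OF M mu(2)] mu(1) by simp
next
  assume S: "S \<nu>"
  have le: "(\<lambda>i. enat (deg L \<nu> i)) \<le> dS S" using dS_upper[of S \<nu>, OF S] by (simp add: le_fun_def)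
  have dn: "deg L \<nu> \<in> omega_obj k (dS S)" using le deg_hi[OF nu] unfolding omega_obj_def le_fun_def by simp
  have o: "omega_mor k (dS S) 0 (deg L \<nu>)" using dn Om_0 unfolding omega_mor_def by (simp add: le_fun_def)
  have "snd (pth S) (0, deg L \<nu>) = \<nu>" using pth_snd[OF g o S order_refl] seg_full[OF nu] by simp
  thus "inZ (pth S) \<nu>" unfolding inZ_def using le unfolding pth_def by simp
qed

lemma Sx_good:
  assumes x: "x \<in> XL k L" and m: "m \<in> Mor L" and Z: "inZ x m"
  shows "good m (\<lambda>\<nu>. \<nu> \<in> Mor L \<and> inZ x \<nu>)"
proof -
  have 3: "\<forall>a b. comp a b \<longrightarrow> (cmp L a b \<in> Mor L \<and> inZ x (cmp L a b)) \<longrightarrow> (a \<in> Mor L \<and> inZ x a)"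
    using Z_prefix[OF x] unfolding comp_def by blast
  have 4: "\<exists>\<alpha> \<beta>. (\<alpha>, \<beta>) \<in> Lmin L a b \<and> cmp L a \<alpha> \<in> Mor L \<and> inZ x (cmp L a \<alpha>)"
    if ab: "a \<in> Mor L" "b \<in> Mor L" "inZ x a" "inZ x b" for a b
  proof -
    note LX = Lmin_X[OF x ab]
    have n: "sup (deg L a) (deg L b) \<in> omega_obj k (fst x)" using Om_sup deg_Om ab by blast
    show ?thesis using LX(1,2) Z_self[OF x n] by metis
  qed
  show ?thesis unfolding good_def using m Z 3 4 by blast
qed

lemma pth_Sx:
  assumes x: "x \<in> XL k L" and m: "m \<in> Mor L" and Z: "inZ x m"
  shows "pth (\<lambda>\<nu>. \<nu> \<in> Mor L \<and> inZ x \<nu>) = x"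
proof -
  let ?S = "\<lambda>\<nu>. \<nu> \<in> Mor L \<and> inZ x \<nu>"
  let ?y = "pth ?S"
  have g: "good m ?S" by (rule Sx_good[OF x m Z])
  have y: "?y \<in> XL k L" by (rule pth_XL[OF g])
  have iff: "inZ ?y \<nu> \<longleftrightarrow> inZ x \<nu>" if "\<nu> \<in> Mor L" for \<nu> using pth_inZ[OF g that] that by simp
  have A: "n \<in> omega_obj k (fst ?y) \<and> snd ?y (0, n) = snd x (0, n)" if n: "n \<in> omega_obj k (fst x)" for n
  proof -
    have "inZ ?y (snd x (0, n))" using iff Z_self[OF x n] by simp
    thus ?thesis using deg_Om[of "snd x (0, n)" ?y] Z_self[OF x n] unfolding inZ_def by simp
  qed
  have B: "n \<in> omega_obj k (fst x) \<and> snd x (0, n) = snd ?y (0, n)" if n: "n \<in> omega_obj k (fst ?y)" for n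
  proof -
    have "inZ x (snd ?y (0, n))" using iff Z_self[OF y n] by simp
    thus ?thesis using deg_Om[of "snd ?y (0, n)" x] Z_self[OF y n] unfolding inZ_def by simp
  qed
  show ?thesis using path_eq[OF y x] A B by blast
qed

end

abbreviation PT :: "('a \<Rightarrow> bool) topology" where
  "PT \<equiv> product_topology (\<lambda>_::'a. discrete_topology (UNIV::bool set)) (UNIV::'a set)"

lemma PT_topspace: "topspace PT = UNIV"
  by simp

lemma cyl_open: "openin PT {S. S a}"
proof -
  have c: "continuous_map PT (discrete_topology (UNIV::bool set)) (\<lambda>S. S a)"
    using continuous_map_product_projection[of a UNIV "\<lambda>_. discrete_topology (UNIV::bool set)"] by simp
  have "openin PT {S \<in> topspace PT. S a \<in> {True}}"
    by (rule openin_continuous_map_preimage[OF c]) (simp only: openin_discrete_topology subset_UNIV)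
  moreover have "{S \<in> topspace PT. S a \<in> {True}} = {S. S a}" unfolding PT_topspace by blast
  ultimately show ?thesis by (simp only:)
qed

lemma cyl_open_neg: "openin PT {S. \<not> S a}"
proof -
  have c: "continuous_map PT (discrete_topology (UNIV::bool set)) (\<lambda>S. S a)"
    using continuous_map_product_projection[of a UNIV "\<lambda>_. discrete_topology (UNIV::bool set)"] by simp
  have "openin PT {S \<in> topspace PT. S a \<in> {False}}"
    by (rule openin_continuous_map_preimage[OF c]) (simp only: openin_discrete_topology subset_UNIV)
  moreover have "{S \<in> topspace PT. S a \<in> {False}} = {S. \<not> S a}" unfolding PT_topspace by blast
  ultimately show ?thesis by (simp only:)
qed

lemma open_ex: "openin PT {S. \<exists>a\<in>A. S a}"
proof -
  have "{S. \<exists>a\<in>A. S a} = \<Union> ((\<lambda>a. {S. S a}) ` A)" by auto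
  moreover have "openin PT (\<Union> ((\<lambda>a. {S. S a}) ` A))" by (rule openin_Union) (auto intro: cyl_open)
  ultimately show ?thesis by (simp only:)
qed

lemma open_all_neg:
  assumes "finite A" shows "openin PT {S. \<forall>a\<in>A. \<not> S a}"
  using assms
proof (induction A rule: finite_induct)
  case empty
  have e: "{S. \<forall>a\<in>{}. \<not> S a} = topspace PT" unfolding PT_topspace by blast
  show ?case unfolding e by (rule openin_topspace)
next
  case (insert x F)
  have "{S. \<forall>a\<in>insert x F. \<not> S a} = {S. \<not> S x} \<inter> {S. \<forall>a\<in>F. \<not> S a}" by auto
  thus ?case by (simp only:) (rule openin_Int[OF cyl_open_neg insert.IH])
qed

lemma bex_pair_snd: "(\<exists>(l, m)\<in>F. P m) \<longleftrightarrow> (\<exists>p\<in>F. P (snd p))"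
  by (simp add: case_prod_beta)

lemma compact_PT: "compact_space PT"
  unfolding compact_space_product_topology
proof (rule disjI2, intro ballI)
  fix i :: 'a
  have "finite (UNIV :: bool set)" by (rule finite)
  thus "compact_space (discrete_topology (UNIV :: bool set))" by (simp only: compact_space_discrete_topology)
qed

locale kgfa = kg +
  assumes fa: "finitely_aligned L"
begin

lemma Lmin_fin: "a \<in> Mor L \<Longrightarrow> b \<in> Mor L \<Longrightarrow> finite (Lmin L a b)"
  using fa unfolding finitely_aligned_def by blast

lemma good_closed: "closedin PT {S. good m S}"
proof -
  have "openin PT (UNIV - {S. good m S})"
  proof (subst openin_subopen, intro ballI)
    fix S assume "S \<in> UNIV - {S. good m S}"
    hence ng: "\<not> good m S" by simp
    show "\<exists>T. openin PT T \<and> S \<in> T \<and> T \<subseteq> UNIV - {S. good m S}"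
    proof (cases "S m")
      case False
      have "{S. \<not> S m} \<subseteq> UNIV - {S. good m S}" using goodD(1) by blast
      thus ?thesis using cyl_open_neg[of m] False by (intro exI[of _ "{S. \<not> S m}"] conjI) simp_all
    next
      case Sm: True
      show ?thesis
      proof (cases "\<forall>a. S a \<longrightarrow> a \<in> Mor L")
        case False
        then obtain a where a: "S a" "a \<notin> Mor L" by blast
        have "{S. S a} \<subseteq> UNIV - {S. good m S}" using goodD(2) a(2) by blast
        thus ?thesis using cyl_open[of a] a(1) by (intro exI[of _ "{S. S a}"] conjI) simp_all
      next
        case SM: True
        show ?thesis
        proof (cases "\<forall>a b. comp a b \<longrightarrow> S (cmp L a b) \<longrightarrow> S a")
          case False
          then obtain a b where ab: "comp a b" "S (cmp L a b)" "\<not> S a" by blast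
          have o: "openin PT ({S. S (cmp L a b)} \<inter> {S. \<not> S a})" by (rule openin_Int[OF cyl_open cyl_open_neg])
          have "{S. S (cmp L a b)} \<inter> {S. \<not> S a} \<subseteq> UNIV - {S. good m S}" using goodD(3) ab(1) by blast
          thus ?thesis using o ab by (intro exI[of _ "{S. S (cmp L a b)} \<inter> {S. \<not> S a}"] conjI) simp_all
        next
          case S3: True
          have "\<not> (\<forall>a b. a \<in> Mor L \<longrightarrow> b \<in> Mor L \<longrightarrow> S a \<longrightarrow> S b \<longrightarrow> (\<exists>\<alpha> \<beta>. (\<alpha>, \<beta>) \<in> Lmin L a b \<and> S (cmp L a \<alpha>)))"
            using ng Sm SM S3 unfolding good_def by blast
          then obtain a b where ab: "a \<in> Mor L" "b \<in> Mor L" "S a" "S b"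
            "\<forall>\<alpha> \<beta>. (\<alpha>, \<beta>) \<in> Lmin L a b \<longrightarrow> \<not> S (cmp L a \<alpha>)" by blast
          let ?A = "(\<lambda>(\<alpha>, \<beta>). cmp L a \<alpha>) ` Lmin L a b"
          have fin: "finite ?A" using Lmin_fin[OF ab(1,2)] by simp
          let ?T = "{S. S a} \<inter> {S. S b} \<inter> {S. \<forall>c\<in>?A. \<not> S c}"
          have o: "openin PT ?T" by (rule openin_Int[OF openin_Int[OF cyl_open cyl_open] open_all_neg[OF fin]])
          have "S \<in> ?T" using ab by auto
          moreover have "?T \<subseteq> UNIV - {S. good m S}"
          proof
            fix S' assume S': "S' \<in> ?T"
            have "\<not> good m S'"
            proof
              assume g': "good m S'"
              have Sa: "S' a" "S' b" "\<forall>c\<in>?A. \<not> S' c" using S' by simp_all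
              obtain \<alpha> \<beta> where ab2: "(\<alpha>, \<beta>) \<in> Lmin L a b" "S' (cmp L a \<alpha>)"
                using goodD(4)[OF g' Sa(1,2)] by blast
              have "cmp L a \<alpha> \<in> ?A" using ab2(1) by (rule rev_image_eqI) simp
              thus False using Sa(3) ab2(2) by blast
            qed
            thus "S' \<in> UNIV - {S. good m S}" by simp
          qed
          ultimately show ?thesis using o by (intro exI[of _ ?T] conjI)
        qed
      qed
    qed
  qed
  thus ?thesis unfolding closedin_def PT_topspace by blast
qed

lemma good_compact: "compactin PT {S. good m S}"
  by (rule closedin_compact_space[OF compact_PT good_closed])

definition gens :: "(('a \<times> 'a) set \<times> 'a path) set set set" where
  "gens = {Psi k L F | F. F \<in> SL L} \<union> {GL k L - Psi k L F | F. F \<in> SL L}"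

lemma Psi_sub: "F \<in> SL L \<Longrightarrow> Psi k L F \<subseteq> GL k L"
  unfolding Psi_def GL_def by blast

lemma Psi_empty: "Psi k L {} = {}"
  unfolding Psi_def DF_def by simp

lemma empty_SL: "{} \<in> SL L"
  unfolding SL_def by simp

lemma gens_Union: "\<Union> gens = GL k L"
proof
  show "\<Union> gens \<subseteq> GL k L" unfolding gens_def using Psi_sub by blast
  have "GL k L - Psi k L {} \<in> gens" unfolding gens_def using empty_SL by blast
  thus "GL k L \<subseteq> \<Union> gens" using Psi_empty by auto
qed

lemma germ_GL: "F \<in> SL L \<Longrightarrow> x \<in> DF k L F \<Longrightarrow> germ k L F x \<in> GL k L"
  unfolding GL_def by blast

lemma Phi_cont:
  assumes F: "F \<in> SL L" and lm: "(l, m) \<in> F"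
  shows "continuous_map (subtopology PT {S. good m S}) (topology_generated_by gens) (\<lambda>S. germ k L F (pth S))"
proof (rule continuous_on_generated_topo)
  let ?C = "{S. good m S}"
  have ts: "topspace (subtopology PT ?C) = ?C" unfolding topspace_subtopology PT_topspace by blast
  have lmM: "l \<in> Mor L" "m \<in> Mor L" using SL_D(2)[OF F lm] by simp_all
  have inGL: "germ k L F (pth S) \<in> GL k L" if "good m S" for S
  proof -
    have "pth S \<in> DF k L F" unfolding DF_iff using pth_XL[OF that] pth_inZ[OF that lmM(2)] goodD(1)[OF that] lm by blast
    thus ?thesis by (rule germ_GL[OF F])
  qed
  show "(\<lambda>S. germ k L F (pth S)) ` topspace (subtopology PT ?C) \<subseteq> \<Union> gens"
    using inGL gens_Union unfolding ts by blast
  fix U assume U: "U \<in> gens"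
  then obtain H where H: "H \<in> SL L" "U = Psi k L H \<or> U = GL k L - Psi k L H" unfolding gens_def by blast
  define A where "A = {cmp L m a | a. \<exists>l' m' a'. (l', m') \<in> H \<and> (a, a') \<in> Lmin L m m' \<and> cmp L l a = cmp L l' a'}"
  have pre: "germ k L F (pth S) \<in> Psi k L H \<longleftrightarrow> (\<exists>c\<in>A. S c)" if g: "good m S" for S
  proof -
    have "germ k L F (pth S) \<in> Psi k L H \<longleftrightarrow>
      (\<exists>l' m' a a'. (l', m') \<in> H \<and> (a, a') \<in> Lmin L m m' \<and> cmp L l a = cmp L l' a' \<and> inZ (pth S) (cmp L m a))"
      by (rule key[OF F lm pth_XL[OF g] _ H(1)]) (use pth_inZ[OF g lmM(2)] goodD(1)[OF g] in simp)
    also have "\<dots> \<longleftrightarrow> (\<exists>l' m' a a'. (l', m') \<in> H \<and> (a, a') \<in> Lmin L m m' \<and> cmp L l a = cmp L l' a' \<and> S (cmp L m a))"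
    proof -
      have "inZ (pth S) (cmp L m a) \<longleftrightarrow> S (cmp L m a)" if "(a, a') \<in> Lmin L m m'" for a a' m'
      proof -
        have "comp m a" using lmM Lmin_D[OF that] unfolding comp_def by simp
        thus ?thesis using pth_inZ[OF g comp_simps(1)] by blast
      qed
      thus ?thesis by blast
    qed
    also have "\<dots> \<longleftrightarrow> (\<exists>c\<in>A. S c)" unfolding A_def by blast
    finally show ?thesis .
  qed
  have finA: "finite A"
  proof -
    have "A \<subseteq> (\<lambda>(a, a'). cmp L m a) ` (\<Union>p\<in>H. Lmin L m (snd p))" unfolding A_def by force
    moreover have "finite (\<Union>p\<in>H. Lmin L m (snd p))"
    proof (rule finite_UN_I)
      show "finite H" using SL_D(1)[OF H(1)] .
      fix p assume "p \<in> H"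
      hence "snd p \<in> Mor L" using SL_D(2)[OF H(1), of "fst p" "snd p"] by simp
      thus "finite (Lmin L m (snd p))" using Lmin_fin lmM(2) by blast
    qed
    ultimately show ?thesis by (meson finite_imageI finite_subset)
  qed
  from H(2) show "openin (subtopology PT ?C) ((\<lambda>S. germ k L F (pth S)) -` U \<inter> topspace (subtopology PT ?C))"
  proof
    assume U1: "U = Psi k L H"
    have "(\<lambda>S. germ k L F (pth S)) -` U \<inter> ?C = {S. \<exists>c\<in>A. S c} \<inter> ?C"
    proof (rule set_eqI)
      fix S show "S \<in> (\<lambda>S. germ k L F (pth S)) -` U \<inter> ?C \<longleftrightarrow> S \<in> {S. \<exists>c\<in>A. S c} \<inter> ?C"
        using pre[of S] U1 by blast
    qed
    thus ?thesis unfolding ts openin_subtopology by (intro exI[of _ "{S. \<exists>c\<in>A. S c}"] conjI open_ex)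
  next
    assume U2: "U = GL k L - Psi k L H"
    have "(\<lambda>S. germ k L F (pth S)) -` U \<inter> ?C = {S. \<forall>c\<in>A. \<not> S c} \<inter> ?C"
    proof (rule set_eqI)
      fix S show "S \<in> (\<lambda>S. germ k L F (pth S)) -` U \<inter> ?C \<longleftrightarrow> S \<in> {S. \<forall>c\<in>A. \<not> S c} \<inter> ?C"
        using pre[of S] inGL[of S] U2 by blast
    qed
    thus ?thesis unfolding ts openin_subtopology by (intro exI[of _ "{S. \<forall>c\<in>A. \<not> S c}"] conjI open_all_neg[OF finA])
  qed
qed

lemma Phi_image:
  assumes F: "F \<in> SL L" and lm: "(l, m) \<in> F"
  shows "(\<lambda>S. germ k L F (pth S)) ` {S. good m S} = (\<lambda>x. germ k L F x) ` {x \<in> XL k L. inZ x m}"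
proof -
  have m: "m \<in> Mor L" using SL_D(2)[OF F lm] by simp
  have "pth ` {S. good m S} = {x \<in> XL k L. inZ x m}"
  proof
    show "pth ` {S. good m S} \<subseteq> {x \<in> XL k L. inZ x m}"
      using pth_XL pth_inZ[OF _ m] goodD(1) by blast
    show "{x \<in> XL k L. inZ x m} \<subseteq> pth ` {S. good m S}"
    proof
      fix x assume "x \<in> {x \<in> XL k L. inZ x m}"
      hence x: "x \<in> XL k L" "inZ x m" by simp_all
      have "x = pth (\<lambda>\<nu>. \<nu> \<in> Mor L \<and> inZ x \<nu>)" using pth_Sx[OF x(1) m x(2)] by simp
      moreover have "good m (\<lambda>\<nu>. \<nu> \<in> Mor L \<and> inZ x \<nu>)" using Sx_good[OF x(1) m x(2)] .
      ultimately show "x \<in> pth ` {S. good m S}" by blast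
    qed
  qed
  thus ?thesis by (metis image_image)
qed

lemma Psi_compact:
  assumes F: "F \<in> SL L"
  shows "compactin (topology_generated_by gens) (Psi k L F)"
proof -
  let ?T = "topology_generated_by gens"
  have each: "compactin ?T ((\<lambda>x. germ k L F x) ` {x \<in> XL k L. inZ x m})" if lm: "(l, m) \<in> F" for l m
  proof -
    have c0: "compactin (subtopology PT {S. good m S}) {S. good m S}"
      unfolding compactin_subtopology using good_compact by blast
    have "compactin ?T ((\<lambda>S. germ k L F (pth S)) ` {S. good m S})"
      by (rule image_compactin[OF c0 Phi_cont[OF F lm]])
    thus ?thesis unfolding Phi_image[OF F lm] .
  qed
  have e1: "Psi k L F = (\<lambda>x. germ k L F x) ` DF k L F"
  proof (rule set_eqI)
    fix g show "g \<in> Psi k L F \<longleftrightarrow> g \<in> (\<lambda>x. germ k L F x) ` DF k L F"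
      unfolding Psi_def image_iff mem_Collect_eq by (metis surj_pair)
  qed
  have e2: "DF k L F = (\<Union>p\<in>F. {x \<in> XL k L. inZ x (snd p)})"
  proof (rule set_eqI)
    fix x show "x \<in> DF k L F \<longleftrightarrow> x \<in> (\<Union>p\<in>F. {x \<in> XL k L. inZ x (snd p)})"
      unfolding DF_iff bex_pair_snd UN_iff mem_Collect_eq by blast
  qed
  have eq: "Psi k L F = \<Union> ((\<lambda>p. (\<lambda>x. germ k L F x) ` {x \<in> XL k L. inZ x (snd p)}) ` F)"
    unfolding e1 e2 image_UN by (rule refl)
  have fin: "finite ((\<lambda>p. (\<lambda>x. germ k L F x) ` {x \<in> XL k L. inZ x (snd p)}) ` F)"
    using SL_D(1)[OF F] by (rule finite_imageI)
  show ?thesis unfolding eq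
  proof (rule compactin_Union[OF fin])
    fix K assume "K \<in> (\<lambda>p. (\<lambda>x. germ k L F x) ` {x \<in> XL k L. inZ x (snd p)}) ` F"
    then obtain p where p: "p \<in> F" "K = (\<lambda>x. germ k L F x) ` {x \<in> XL k L. inZ x (snd p)}" by blast
    have "(fst p, snd p) \<in> F" using p(1) by simp
    from each[OF this] show "compactin ?T K" using p(2) by simp
  qed
qed

end

context kgfa
begin

lemma GL_E:
  assumes "g \<in> GL k L"
  obtains F x where "F \<in> SL L" "x \<in> DF k L F" "g = germ k L F x"
  using assms unfolding GL_def by blast

lemma topspace_T: "topspace (topology_generated_by gens) = GL k L"
  using gens_Union by simp

lemma open_Psi: "H \<in> SL L \<Longrightarrow> openin (topology_generated_by gens) (Psi k L H)"
  by (rule topology_generated_by_Basis) (auto simp: gens_def)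

lemma open_coPsi: "H \<in> SL L \<Longrightarrow> openin (topology_generated_by gens) (GL k L - Psi k L H)"
  by (rule topology_generated_by_Basis) (auto simp: gens_def)

lemma sep_open:
  assumes H: "H \<in> SL L" and g1: "g1 \<in> Psi k L H" and g2: "g2 \<in> GL k L" "g2 \<notin> Psi k L H"
  shows "\<exists>U V. openin (topology_generated_by gens) U \<and> openin (topology_generated_by gens) V \<and>
     g1 \<in> U \<and> g2 \<in> V \<and> disjnt U V"
  using open_Psi[OF H] open_coPsi[OF H] g1 g2 unfolding disjnt_def by blast

lemma hausdorff: "Hausdorff_space (topology_generated_by gens)"
  unfolding Hausdorff_space_def topspace_T
proof (intro allI impI, elim conjE)
  fix g1 g2 assume g1: "g1 \<in> GL k L" and g2: "g2 \<in> GL k L" and ne: "g1 \<noteq> g2"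
  obtain F x where F: "F \<in> SL L" "x \<in> DF k L F" "g1 = germ k L F x" using GL_E[OF g1] by blast
  obtain G y where G: "G \<in> SL L" "y \<in> DF k L G" "g2 = germ k L G y" using GL_E[OF g2] by blast
  have xX: "x \<in> XL k L" using F(2) unfolding DF_iff by simp
  have yX: "y \<in> XL k L" using G(2) unfolding DF_iff by simp
  show "\<exists>U V. openin (topology_generated_by gens) U \<and> openin (topology_generated_by gens) V \<and>
     g1 \<in> U \<and> g2 \<in> V \<and> disjnt U V"
  proof (cases "x = y")
    case True
    have g1P: "g1 \<in> Psi k L F" using Psi_I[OF F(1,2) refl] F(3) by simp
    have "g2 \<notin> Psi k L F"
    proof
      assume "g2 \<in> Psi k L F"
      hence "y \<in> DF k L F \<and> agree G F y" using Psi_D[OF G(1,2) F(1)] G(3) by simp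
      hence "germ k L G y = germ k L F y" using germ_eq_iff[OF G(1,2) F(1)] by simp
      thus False using ne F(3) G(3) True by simp
    qed
    thus ?thesis using sep_open[OF F(1) g1P g2] by blast
  next
    case False
    hence "\<not> ((\<forall>n\<in>omega_obj k (fst x). n \<in> omega_obj k (fst y) \<and> snd y (0, n) = snd x (0, n)) \<and>
              (\<forall>n\<in>omega_obj k (fst y). n \<in> omega_obj k (fst x) \<and> snd x (0, n) = snd y (0, n)))"
      using path_eq[OF xX yX] by blast
    hence "(\<exists>n\<in>omega_obj k (fst x). \<not> (n \<in> omega_obj k (fst y) \<and> snd y (0, n) = snd x (0, n))) \<or>
           (\<exists>n\<in>omega_obj k (fst y). \<not> (n \<in> omega_obj k (fst x) \<and> snd x (0, n) = snd y (0, n)))"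
      by blast
    thus ?thesis
    proof
      assume "\<exists>n\<in>omega_obj k (fst x). \<not> (n \<in> omega_obj k (fst y) \<and> snd y (0, n) = snd x (0, n))"
      then obtain n where n: "n \<in> omega_obj k (fst x)" "\<not> (n \<in> omega_obj k (fst y) \<and> snd y (0, n) = snd x (0, n))"
        by blast
      obtain H where H: "H \<in> SL L" "germ k L F x \<in> Psi k L H" "germ k L G y \<notin> Psi k L H"
        using sep_lemma[OF F(1,2) G(1,2) n] by blast
      show ?thesis using sep_open[OF H(1) _ g2] H F(3) G(3) by blast
    next
      assume "\<exists>n\<in>omega_obj k (fst y). \<not> (n \<in> omega_obj k (fst x) \<and> snd x (0, n) = snd y (0, n))"
      then obtain n where n: "n \<in> omega_obj k (fst y)" "\<not> (n \<in> omega_obj k (fst x) \<and> snd x (0, n) = snd y (0, n))"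
        by blast
      obtain H where H: "H \<in> SL L" "germ k L G y \<in> Psi k L H" "germ k L F x \<notin> Psi k L H"
        using sep_lemma[OF G(1,2) F(1,2) n] by blast
      have "\<exists>U V. openin (topology_generated_by gens) U \<and> openin (topology_generated_by gens) V \<and>
         g2 \<in> U \<and> g1 \<in> V \<and> disjnt U V" using sep_open[OF H(1) _ g1] H F(3) G(3) by blast
      thus ?thesis unfolding disjnt_def by blast
    qed
  qed
qed

lemma loc_compact: "locally_compact_space (topology_generated_by gens)"
  unfolding locally_compact_space_def topspace_T
proof
  fix g assume g: "g \<in> GL k L"
  obtain F x where F: "F \<in> SL L" "x \<in> DF k L F" "g = germ k L F x" using GL_E[OF g] by blast
  have "g \<in> Psi k L F" using Psi_I[OF F(1,2) refl] F(3) by simp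
  thus "\<exists>U K. openin (topology_generated_by gens) U \<and> compactin (topology_generated_by gens) K \<and> g \<in> U \<and> U \<subseteq> K"
    using open_Psi[OF F(1)] Psi_compact[OF F(1)] by blast
qed

end

theorem proposition6p3:
  fixes k :: nat and L :: "'a kgraph"
  assumes "is_kgraph k L" and "finitely_aligned L"
  defines "T \<equiv> topology_generated_by
             ({Psi k L F | F. F \<in> SL L} \<union> {GL k L - Psi k L F | F. F \<in> SL L})"
  shows "topspace T = GL k L \<and> Hausdorff_space T \<and> locally_compact_space T \<and>
         (\<forall>F\<in>SL L. compactin T (Psi k L F))"
proof -
  interpret kgfa k L
    using assms(1,2) by (unfold_locales)
  have TT: "T = topology_generated_by gens" unfolding T_def gens_def ..
  show ?thesis unfolding TT using topspace_T hausdorff loc_compact Psi_compact by blast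
qed


end
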